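(* As a right ideal of $\Sigma(B_n)$, $I_n^0$ is generated by $X_{\{0\}}$, i.e. $I_n^0=X_{\{0\}}\cdot\Sigma(B_n)$. As a right ideal of $\mathcal{P}_n$, $\mathring{\mathcal{P}}_n$ is generated by $\mathring{P}_\emptyset$, i.e. $\mathring{\mathcal{P}}_n=\mathring{P}_\emptyset\cdot\mathcal{P}_n$.
   Context: Group algebras over $\mathbb{Q}$ with product composition $(uv)(i)=u(v(i))$. $B_n$: signed permutations $w=w_1\dots w_n$ (bijections of $\{\pm1,\dots,\pm n\}$ with $w(-i)=-w(i)$), values ordered $\cdots<-2<-1<1<2<\cdots$, $w_0=0$, $\mathrm{Des}(w)=\{i\in\{0,\dots,n-1\}:w_i>w_{i+1}\}$; $X_J=\sum_{\mathrm{Des}(w)\subseteq J}w$ for $J\subseteq\{0,\dots,n-1\}$; $\Sigma(B_n)=\mathrm{span}\{X_J\}$ (a subalgebra of $\mathbb{Q}B_n$); $I_n^0=\mathrm{span}\{X_J:0\in J\}$ (a two-sided ideal of $\Sigma(B_n)$). Note $X_{\{0\}}$ is the sum of all $w\in B_n$ with $w_1<w_2<\dots<w_n$. For $u\in\mathfrak{S}_n$: $\mathrm{Peak}(u)=\{i\in[n-1]:u_{i-1}<u_i>u_{i+1}\}$ with $u_0=0$, $\mathring{\mathrm{Peak}}(u)=\{i\in\{2,\dots,n-1\}:u_{i-1}<u_i>u_{i+1}\}$; $\mathcal{F}_n$: subsets of $[n-1]$ with no two consecutive integers, $\mathring{\mathcal{F}}_n=\{F\in\mathcal{F}_n:1\notin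 F\}$; $P_F=\sum_{\mathrm{Peak}(u)=F}u$, $\mathring{P}_F=\sum_{\mathring{\mathrm{Peak}}(u)=F}u$; $\mathcal{P}_n=\mathrm{span}\{P_F\}$ (the peak algebra), $\mathring{\mathcal{P}}_n=\mathrm{span}\{\mathring{P}_F\}$. Thus $\mathring{P}_\emptyset$ is the sum of all $u$ with $u_1>\dots>u_i<u_{i+1}<\dots<u_n$ for some $i$. *)

theory Defs
  imports Complex_Main "HOL-Combinatorics.Permutations"
begin

text \<open>An element of the group algebra QG of a finite group G of functions
(composition product) is a function G to rat (values outside G are irrelevant
and taken to be 0). Product: (a*b)(w) = sum over u v in G with u o v = w of a(u) b(v),
matching (uv)(i) = u(v(i)).\<close>

definition galg_mult :: "('a \<Rightarrow> 'a) set \<Rightarrow> (('a \<Rightarrow> 'a) \<Rightarrow> rat) \<Rightarrow> (('a \<Rightarrow> 'a) \<Rightarrow> rat) \<Rightarrow> (('a \<Rightarrow> 'a) \<Rightarrow> rat)" where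
  "galg_mult G a b = (\<lambda>w. \<Sum>u\<in>G. \<Sum>v\<in>G. if u \<circ> v = w then a u * b v else 0)"

definition gsum :: "('a \<Rightarrow> 'a) set \<Rightarrow> (('a \<Rightarrow> 'a) \<Rightarrow> rat)" where
  "gsum S = (\<lambda>w. if w \<in> S then 1 else 0)"

definition qspan :: "'i set \<Rightarrow> ('i \<Rightarrow> ('b \<Rightarrow> rat)) \<Rightarrow> ('b \<Rightarrow> rat) set" where
  "qspan I X = {f. \<exists>c. f = (\<lambda>w. \<Sum>i\<in>I. c i * X i w)}"

text \<open>Signed permutations: bijections w of {-n..n}-{0} with w(-i) = -w(i),
extended by the identity outside; w_i = w i and w_0 = w 0 = 0.\<close>
definition signed_perms :: "nat \<Rightarrow> (int \<Rightarrow> int) set" where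
  "signed_perms n = {w. w permutes ({-int n..int n} - {0}) \<and> (\<forall>i. w (-i) = - w i)}"

definition DesB :: "nat \<Rightarrow> (int \<Rightarrow> int) \<Rightarrow> nat set" where
  "DesB n w = {i \<in> {0..<n}. w (int i) > w (int i + 1)}"

definition XB :: "nat \<Rightarrow> nat set \<Rightarrow> ((int \<Rightarrow> int) \<Rightarrow> rat)" where
  "XB n J = gsum {w \<in> signed_perms n. DesB n w \<subseteq> J}"

definition SigmaB :: "nat \<Rightarrow> ((int \<Rightarrow> int) \<Rightarrow> rat) set" where
  "SigmaB n = qspan (Pow {0..<n}) (XB n)"

definition IB0 :: "nat \<Rightarrow> ((int \<Rightarrow> int) \<Rightarrow> rat) set" where
  "IB0 n = qspan {J \<in> Pow {0..<n}. 0 \<in> J} (XB n)"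

definition sym_perms :: "nat \<Rightarrow> (nat \<Rightarrow> nat) set" where
  "sym_perms n = {u. u permutes {1..n}}"

text \<open>With u 0 = 0 automatically (u fixes 0).\<close>
definition Peak :: "nat \<Rightarrow> (nat \<Rightarrow> nat) \<Rightarrow> nat set" where
  "Peak n u = {i \<in> {1..n-1}. u (i - 1) < u i \<and> u i > u (i + 1)}"

definition PeakC :: "nat \<Rightarrow> (nat \<Rightarrow> nat) \<Rightarrow> nat set" where
  "PeakC n u = {i \<in> {2..n-1}. u (i - 1) < u i \<and> u i > u (i + 1)}"

definition Fam :: "nat \<Rightarrow> nat set set" where
  "Fam n = {F. F \<subseteq> {1..n-1} \<and> (\<forall>i\<in>F. i + 1 \<notin> F)}"

definition FamC :: "nat \<Rightarrow> nat set set" where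
  "FamC n = {F \<in> Fam n. 1 \<notin> F}"

definition PP :: "nat \<Rightarrow> nat set \<Rightarrow> ((nat \<Rightarrow> nat) \<Rightarrow> rat)" where
  "PP n F = gsum {u \<in> sym_perms n. Peak n u = F}"

definition PPC :: "nat \<Rightarrow> nat set \<Rightarrow> ((nat \<Rightarrow> nat) \<Rightarrow> rat)" where
  "PPC n F = gsum {u \<in> sym_perms n. PeakC n u = F}"

definition PeakAlg :: "nat \<Rightarrow> ((nat \<Rightarrow> nat) \<Rightarrow> rat) set" where
  "PeakAlg n = qspan (Fam n) (PP n)"

definition PeakAlgC :: "nat \<Rightarrow> ((nat \<Rightarrow> nat) \<Rightarrow> rat) set" where
  "PeakAlgC n = qspan (FamC n) (PPC n)"

end

theory Submission
  imports Defs
begin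

lemma qspan_gen: "finite I \<Longrightarrow> i \<in> I \<Longrightarrow> X i \<in> qspan I X"
proof -
  have "X i = (\<lambda>w. \<Sum>j\<in>I. (if j = i then 1 else 0) * X j w)"
    if "finite I" "i \<in> I"
  proof (rule ext)
    fix w
    have "(\<Sum>j\<in>I. (if j = i then 1 else 0) * X j w) = (\<Sum>j\<in>I. if j = i then X j w else 0)"
      by (rule sum.cong) auto
    then show "X i w = (\<Sum>j\<in>I. (if j = i then 1 else 0) * X j w)" using that by simp
  qed
  then show "finite I \<Longrightarrow> i \<in> I \<Longrightarrow> X i \<in> qspan I X" unfolding qspan_def
    by (intro CollectI exI[where x="\<lambda>j. if j = i then 1 else 0"]) 
qed

lemma qspan_zero: "(\<lambda>w. 0) \<in> qspan I X"
  unfolding qspan_def by (auto intro!: exI[of _ "\<lambda>_. 0"])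

lemma qspan_add: "f \<in> qspan I X \<Longrightarrow> g \<in> qspan I X \<Longrightarrow> (\<lambda>w. f w + g w) \<in> qspan I X"
proof -
  assume "f \<in> qspan I X" "g \<in> qspan I X"
  then obtain c d where "f = (\<lambda>w. \<Sum>i\<in>I. c i * X i w)" "g = (\<lambda>w. \<Sum>i\<in>I. d i * X i w)"
    unfolding qspan_def by auto
  then have "(\<lambda>w. f w + g w) = (\<lambda>w. \<Sum>i\<in>I. (c i + d i) * X i w)"
    by (auto simp: sum.distrib ring_distribs)
  then show ?thesis unfolding qspan_def by (intro CollectI exI[where x="\<lambda>i. c i + d i"])
qed

lemma qspan_smult: "f \<in> qspan I X \<Longrightarrow> (\<lambda>w. a * f w) \<in> qspan I X"
proof -
  assume "f \<in> qspan I X"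
  then obtain c where "f = (\<lambda>w. \<Sum>i\<in>I. c i * X i w)" unfolding qspan_def by auto
  then have "(\<lambda>w. a * f w) = (\<lambda>w. \<Sum>i\<in>I. (a * c i) * X i w)"
    by (auto simp: sum_distrib_left mult.assoc)
  then show ?thesis unfolding qspan_def by (intro CollectI exI[where x="\<lambda>i. a * c i"])
qed

lemma qspan_diff: "f \<in> qspan I X \<Longrightarrow> g \<in> qspan I X \<Longrightarrow> (\<lambda>w. f w - g w) \<in> qspan I X"
  using qspan_add[of f I X "\<lambda>w. (-1) * g w"] qspan_smult[of g I X "-1"] by simp

lemma qspan_sum: "finite A \<Longrightarrow> (\<And>a. a \<in> A \<Longrightarrow> f a \<in> qspan I X) \<Longrightarrow> (\<lambda>w. \<Sum>a\<in>A. f a w) \<in> qspan I X"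
proof (induction A rule: finite_induct)
  case empty then show ?case by (simp add: qspan_zero)
next
  case (insert x F)
  then show ?case using qspan_add[of "f x" I X "\<lambda>w. \<Sum>a\<in>F. f a w"] by simp
qed

lemma qspan_subset:
  assumes "finite I" "\<And>i. i \<in> I \<Longrightarrow> X i \<in> qspan I' Y"
  shows "qspan I X \<subseteq> qspan I' Y"
proof
  fix f assume "f \<in> qspan I X"
  then obtain c where f: "f = (\<lambda>w. \<Sum>i\<in>I. c i * X i w)" unfolding qspan_def by auto
  show "f \<in> qspan I' Y" unfolding f
    by (rule qspan_sum[OF assms(1)]) (rule qspan_smult, rule assms(2))
qed

lemma qspan_image:
  assumes "\<And>c. L (\<lambda>w. \<Sum>i\<in>I. c i * X i w) = (\<lambda>w. \<Sum>i\<in>I. c i * L (X i) w)"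
  shows "L ` qspan I X = qspan I (\<lambda>i. L (X i))"
  unfolding qspan_def using assms by (auto simp: image_def)

lemma qspan_scaled:
  assumes "finite I" "\<And>i. i \<in> I \<Longrightarrow> X i = (\<lambda>w. c i * Y i w)" "\<And>i. i \<in> I \<Longrightarrow> c i \<noteq> 0"
  shows "qspan I X = qspan I Y"
proof
  show "qspan I X \<subseteq> qspan I Y"
    using assms by (intro qspan_subset) (auto intro!: qspan_smult qspan_gen)
  show "qspan I Y \<subseteq> qspan I X"
  proof (rule qspan_subset[OF assms(1)])
    fix i assume i: "i \<in> I"
    have "Y i = (\<lambda>w. (1 / c i) * X i w)" using assms(2,3)[OF i] by auto
    moreover have "(\<lambda>w. (1 / c i) * X i w) \<in> qspan I X" using i assms(1) by (intro qspan_smult qspan_gen)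
    ultimately show "Y i \<in> qspan I X" by simp
  qed
qed

lemma galg_mult_alt: "galg_mult G a b w = (\<Sum>u\<in>G. \<Sum>v\<in>G. of_bool (u \<circ> v = w) * a u * b v)"
  unfolding galg_mult_def by (intro sum.cong refl) auto

lemma galg_mult_lin2:
  "galg_mult G a (\<lambda>w. \<Sum>i\<in>I. c i * X i w) = (\<lambda>w. \<Sum>i\<in>I. c i * galg_mult G a (X i) w)"
  by (rule ext) (simp add: galg_mult_alt sum_distrib_left sum_distrib_right mult_ac sum.swap[of _ I])

lemma galg_mult_smult1:
  "galg_mult G (\<lambda>x. r * a x) b = (\<lambda>w. r * galg_mult G a b w)"
  by (rule ext) (simp add: galg_mult_alt sum_distrib_left mult_ac)

lemma galg_mult_out:
  assumes "\<And>u v. u \<in> G \<Longrightarrow> v \<in> G \<Longrightarrow> u \<circ> v \<in> G" "w \<notin> G"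
  shows "galg_mult G a b w = 0"
  unfolding galg_mult_def using assms by (auto intro!: sum.neutral)

lemma galg_mult_unique:
  assumes "\<And>u v. u \<in> G \<Longrightarrow> v \<in> G \<Longrightarrow> (u \<circ> v = w) = (v = h u)" "\<And>u. u \<in> G \<Longrightarrow> h u \<in> G"
    "finite G"
  shows "galg_mult G a b w = (\<Sum>u\<in>G. a u * b (h u))"
  unfolding galg_mult_def
proof (intro sum.cong refl)
  fix u assume u: "u \<in> G"
  have "(\<Sum>v\<in>G. if u \<circ> v = w then a u * b v else 0) = (\<Sum>v\<in>G. if v = h u then a u * b v else 0)"
    using assms(1)[OF u] by (intro sum.cong) auto
  also have "\<dots> = a u * b (h u)" using assms(2)[OF u] assms(3) by (simp add: sum.delta')
  finally show "(\<Sum>v\<in>G. if u \<circ> v = w then a u * b v else 0) = a u * b (h u)" .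
qed

definition Dn :: "nat \<Rightarrow> int set" where "Dn n = {-int n..int n} - {0}"

lemma finite_Dn[simp]: "finite (Dn n)" unfolding Dn_def by simp

lemma Dn_iff: "t \<in> Dn n \<longleftrightarrow> t \<noteq> 0 \<and> \<bar>t\<bar> \<le> int n" unfolding Dn_def by auto

lemma Dn_neg[simp]: "- t \<in> Dn n \<longleftrightarrow> t \<in> Dn n" unfolding Dn_iff by auto

lemma sp_permutes: "w \<in> signed_perms n \<Longrightarrow> w permutes Dn n"
  unfolding signed_perms_def Dn_def by auto

lemma sp_odd: "w \<in> signed_perms n \<Longrightarrow> w (- i) = - w i"
  unfolding signed_perms_def by auto

lemma sp_intro: "w permutes Dn n \<Longrightarrow> (\<And>i. w (- i) = - w i) \<Longrightarrow> w \<in> signed_perms n"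
  unfolding signed_perms_def Dn_def by auto

lemma sp_in: "w \<in> signed_perms n \<Longrightarrow> t \<in> Dn n \<Longrightarrow> w t \<in> Dn n"
  by (metis sp_permutes permutes_in_image)

lemma sp_out: "w \<in> signed_perms n \<Longrightarrow> t \<notin> Dn n \<Longrightarrow> w t = t"
  by (metis sp_permutes permutes_not_in)

lemma sp_zero: "w \<in> signed_perms n \<Longrightarrow> w 0 = 0"
  by (rule sp_out) (simp_all add: Dn_def)

lemma sp_inj: "w \<in> signed_perms n \<Longrightarrow> w s = w t \<Longrightarrow> s = t"
  by (metis sp_permutes permutes_inj injD)

lemma sp_comp: "u \<in> signed_perms n \<Longrightarrow> v \<in> signed_perms n \<Longrightarrow> u \<circ> v \<in> signed_perms n"
proof (rule sp_intro)
  assume "u \<in> signed_perms n" "v \<in> signed_perms n"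
  then show "u \<circ> v permutes Dn n" by (metis sp_permutes permutes_compose)
  fix i show "(u \<circ> v) (- i) = - (u \<circ> v) i" using \<open>u \<in> _\<close> \<open>v \<in> _\<close> by (simp add: sp_odd)
qed

lemma sp_inv: assumes "u \<in> signed_perms n" shows "inv u \<in> signed_perms n"
proof (rule sp_intro)
  show "inv u permutes Dn n" using assms by (simp add: sp_permutes permutes_inv)
  fix i
  have b: "bij u" using assms sp_permutes permutes_bij by blast
  have "u (- inv u i) = - i" using assms b by (simp add: sp_odd surj_f_inv_f bij_is_surj)
  then show "inv u (- i) = - inv u i" using b by (metis bij_inv_eq_iff)
qed

lemma finite_sp: "finite (signed_perms n)"
proof -
  have "signed_perms n \<subseteq> {w. w permutes Dn n}" using sp_permutes by blast
  then show ?thesis using finite_permutations[of "Dn n"] finite_subset by auto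
qed

lemma sp_comp_eq: assumes "u \<in> signed_perms n" shows "(u \<circ> v = w) = (v = inv u \<circ> w)"
proof -
  have b: "bij u" using assms sp_permutes permutes_bij by blast
  show ?thesis
  proof
    assume "u \<circ> v = w" then show "v = inv u \<circ> w" using b by (auto simp: fun_eq_iff bij_inv_eq_iff)
  next
    assume "v = inv u \<circ> w" then show "u \<circ> v = w" using b by (auto simp: fun_eq_iff bij_inv_eq_iff)
  qed
qed

lemma galg_mult_sp:
  assumes "w \<in> signed_perms n"
  shows "galg_mult (signed_perms n) a b w = (\<Sum>u\<in>signed_perms n. a u * b (inv u \<circ> w))"
  by (rule galg_mult_unique) (simp_all add: sp_comp_eq sp_comp sp_inv assms finite_sp)

lemma galg_mult_sp_out:
  "w \<notin> signed_perms n \<Longrightarrow> galg_mult (signed_perms n) a b w = 0"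
  by (rule galg_mult_out) (simp_all add: sp_comp)

lemma XB_apply: "XB n J w = (if w \<in> signed_perms n \<and> DesB n w \<subseteq> J then 1 else 0)"
  unfolding XB_def gsum_def by auto

definition TN :: "nat \<Rightarrow> nat set \<Rightarrow> int set" where
  "TN n N = {t \<in> Dn n. (t < 0) = (nat \<bar>t\<bar> \<in> N)}"

definition rk :: "nat \<Rightarrow> nat set \<Rightarrow> int \<Rightarrow> nat" where
  "rk n N t = card {s \<in> TN n N. s \<le> t}"

definition rho :: "nat \<Rightarrow> nat set \<Rightarrow> int \<Rightarrow> int" where
  "rho n N t = (if t \<in> TN n N then int (rk n N t) else if - t \<in> TN n N then - int (rk n N (- t)) else t)"

lemma TN_sub: "TN n N \<subseteq> Dn n" unfolding TN_def by auto

lemma finite_TN[simp]: "finite (TN n N)" by (rule finite_subset[OF TN_sub]) simp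

lemma TN_excl: "t \<in> Dn n \<Longrightarrow> (- t \<in> TN n N) = (t \<notin> TN n N)"
  unfolding TN_def Dn_iff by auto

lemma card_TN: "card (TN n N) = n"
proof -
  have "bij_betw (\<lambda>t. nat \<bar>t\<bar>) (TN n N) {1..n}"
  proof (rule bij_betwI')
    fix s t assume st: "s \<in> TN n N" "t \<in> TN n N"
    show "(nat \<bar>s\<bar> = nat \<bar>t\<bar>) = (s = t)"
    proof
      assume "nat \<bar>s\<bar> = nat \<bar>t\<bar>"
      then have "s = t \<or> s = - t" by auto
      moreover have "s \<noteq> - t" using st TN_excl[of t n N] TN_sub by auto
      ultimately show "s = t" by blast
    qed simp
  next
    fix t assume "t \<in> TN n N"
    then have "t \<in> Dn n" using TN_sub by blast
    then have "t \<noteq> 0" "\<bar>t\<bar> \<le> int n" unfolding Dn_iff by auto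
    then show "nat \<bar>t\<bar> \<in> {1..n}" by auto
  next
    fix a assume a: "a \<in> {1..n}"
    then have d: "int a \<in> Dn n" unfolding Dn_iff by auto
    show "\<exists>t\<in>TN n N. a = nat \<bar>t\<bar>"
    proof (cases "int a \<in> TN n N")
      case True then show ?thesis by (intro bexI[of _ "int a"]) auto
    next
      case False then have "- int a \<in> TN n N" using TN_excl[OF d] by simp
      then show ?thesis by (intro bexI[of _ "- int a"]) auto
    qed
  qed
  then show ?thesis by (simp add: bij_betw_same_card)
qed

lemma rk_pos: assumes "t \<in> TN n N" shows "1 \<le> rk n N t"
proof -
  have "t \<in> {s \<in> TN n N. s \<le> t}" using assms by simp
  then have "{s \<in> TN n N. s \<le> t} \<noteq> {}" by blast
  then have "0 < card {s \<in> TN n N. s \<le> t}" by (simp add: card_gt_0_iff)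
  then show ?thesis unfolding rk_def by simp
qed

lemma rk_le: "rk n N t \<le> n"
  unfolding rk_def using card_mono[of "TN n N" "{s \<in> TN n N. s \<le> t}"] card_TN by auto

lemma rk_strict: assumes "s \<in> TN n N" "t \<in> TN n N" "s < t" shows "rk n N s < rk n N t"
  unfolding rk_def
proof (rule psubset_card_mono)
  show "{s' \<in> TN n N. s' \<le> s} \<subset> {s \<in> TN n N. s \<le> t}"
  proof (rule psubsetI)
    show "{s' \<in> TN n N. s' \<le> s} \<subseteq> {s \<in> TN n N. s \<le> t}" using assms by auto
    have "t \<in> {s \<in> TN n N. s \<le> t}" "t \<notin> {s' \<in> TN n N. s' \<le> s}" using assms by auto
    then show "{s' \<in> TN n N. s' \<le> s} \<noteq> {s \<in> TN n N. s \<le> t}" by blast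
  qed
qed simp

lemma rk_less_iff: assumes "s \<in> TN n N" "t \<in> TN n N" shows "(rk n N s < rk n N t) = (s < t)"
  using rk_strict[OF assms] rk_strict[OF assms(2,1)] by (cases "s < t"; cases "s = t") auto

lemma rho_pos_iff: assumes "t \<in> Dn n" shows "(0 < rho n N t) = (t \<in> TN n N)"
proof (cases "t \<in> TN n N")
  case True then show ?thesis using rk_pos[of t n N] by (simp add: rho_def)
next
  case False then have "- t \<in> TN n N" using TN_excl[OF assms] by simp
  then show ?thesis using False rk_pos[of "-t" n N] by (simp add: rho_def)
qed

lemma rho_in: assumes "t \<in> Dn n" shows "rho n N t \<in> Dn n"
proof (cases "t \<in> TN n N")
  case True then show ?thesis using rk_pos[OF True] rk_le[of n N t] by (auto simp: rho_def Dn_iff)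
next
  case False then have "- t \<in> TN n N" using TN_excl[OF assms] by simp
  moreover have "1 \<le> rk n N (-t)" by (rule rk_pos) fact
  ultimately show ?thesis using False rk_le[of n N "-t"] by (auto simp: rho_def Dn_iff)
qed

lemma rho_out: assumes "t \<notin> Dn n" shows "rho n N t = t"
proof -
  have "t \<notin> TN n N" "- t \<notin> TN n N" using assms TN_sub[of n N] by auto
  then show ?thesis unfolding rho_def by simp
qed

lemma rho_odd: "rho n N (- t) = - rho n N t"
proof (cases "t \<in> Dn n")
  case True then show ?thesis using TN_excl[OF True, of N] by (auto simp: rho_def)
next
  case False then show ?thesis using rho_out[OF False] rho_out[of "-t" n N] by simp
qed

lemma rho_less_iff:
  assumes "s \<in> Dn n" "t \<in> Dn n"
  shows "(rho n N s < rho n N t) = (((s \<in> TN n N) = (t \<in> TN n N) \<and> s < t) \<or> (s \<notin> TN n N \<and> t \<in> TN n N))"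
proof -
  have es: "(- s \<in> TN n N) = (s \<notin> TN n N)" and et: "(- t \<in> TN n N) = (t \<notin> TN n N)"
    using TN_excl assms by auto
  show ?thesis
  proof (cases "s \<in> TN n N"; cases "t \<in> TN n N")
    assume "s \<in> TN n N" "t \<in> TN n N" then show ?thesis by (simp add: rho_def rk_less_iff)
  next
    assume a: "s \<in> TN n N" "t \<notin> TN n N"
    then have "0 < rho n N s" "\<not> 0 < rho n N t" using rho_pos_iff assms by auto
    then show ?thesis using a by auto
  next
    assume a: "s \<notin> TN n N" "t \<in> TN n N"
    then have "\<not> 0 < rho n N s" "0 < rho n N t" using rho_pos_iff assms by auto
    then show ?thesis using a by auto
  next
    assume a: "s \<notin> TN n N" "t \<notin> TN n N"
    then have b: "- s \<in> TN n N" "- t \<in> TN n N" using es et by auto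
    have "(rho n N s < rho n N t) = (rk n N (-t) < rk n N (-s))" using a b by (simp add: rho_def)
    also have "\<dots> = (s < t)" using rk_less_iff[OF b(2) b(1)] by simp
    finally show ?thesis using a by simp
  qed
qed

lemma rho_inj: assumes "s \<in> Dn n" "t \<in> Dn n" "rho n N s = rho n N t" shows "s = t"
  using rho_less_iff[OF assms(1,2), of N] rho_less_iff[OF assms(2,1), of N] assms(3)
  by (cases "s < t"; cases "t < s") auto

lemma rho_sp: "rho n N \<in> signed_perms n"
proof (rule sp_intro)
  have inj: "inj_on (rho n N) (Dn n)" using rho_inj by (meson inj_onI)
  have "rho n N ` Dn n = Dn n" using rho_in inj by (intro endo_inj_surj) auto
  then have "bij_betw (rho n N) (Dn n) (Dn n)" using inj by (simp add: bij_betw_def)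
  then show "rho n N permutes Dn n" by (rule bij_imp_permutes) (simp add: rho_out)
qed (rule rho_odd)

lemma rho_bij: "bij (rho n N)"
  using rho_sp sp_permutes permutes_bij by blast

lemma inv_rho_U: "DesB n (inv (rho n N)) \<subseteq> {0}"
proof
  fix i assume i: "i \<in> DesB n (inv (rho n N))"
  show "i \<in> {0}"
  proof (rule ccontr)
    assume "i \<notin> {0}"
    then have i1: "1 \<le> i" "i < n" using i unfolding DesB_def by auto
    let ?r = "rho n N"
    define s where "s = inv ?r (int i)"
    define t where "t = inv ?r (int i + 1)"
    have a: "int i \<in> Dn n" "int i + 1 \<in> Dn n" using i1 unfolding Dn_iff by auto
    have sd: "s \<in> Dn n" "t \<in> Dn n" unfolding s_def t_def using sp_in[OF sp_inv[OF rho_sp]] a by auto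
    have rs: "?r s = int i" "?r t = int i + 1" unfolding s_def t_def
      using rho_bij by (simp_all add: surj_f_inv_f bij_is_surj)
    have "0 < rho n N s" "0 < rho n N t" using rs i1 by auto
    then have "s \<in> TN n N" "t \<in> TN n N" using rho_pos_iff[OF sd(1)] rho_pos_iff[OF sd(2)] by auto
    then have "s < t" using rho_less_iff[OF sd, of N] rs by auto
    moreover have "s > t" using i unfolding DesB_def s_def t_def by auto
    ultimately show False by simp
  qed
qed

lemma inv_rho_inj:
  assumes "N \<subseteq> {1..n}" "M \<subseteq> {1..n}" "inv (rho n N) = inv (rho n M)"
  shows "N = M"
proof -
  have r: "rho n N = rho n M" using assms(3) rho_bij by (metis inv_inv_eq)
  have "a \<in> N \<longleftrightarrow> a \<in> M" if a: "a \<in> {1..n}" for a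
  proof -
    have d: "- int a \<in> Dn n" using a unfolding Dn_iff by auto
    have "- int a < 0" using a by auto
    then have "a \<in> N \<longleftrightarrow> - int a \<in> TN n N" using d unfolding TN_def by auto
    also have "\<dots> \<longleftrightarrow> 0 < rho n N (- int a)" using rho_pos_iff[OF d] by simp
    also have "\<dots> \<longleftrightarrow> - int a \<in> TN n M" using rho_pos_iff[OF d] r by simp
    also have "\<dots> \<longleftrightarrow> a \<in> M" using d \<open>- int a < 0\<close> unfolding TN_def by auto
    finally show ?thesis .
  qed
  then show ?thesis using assms(1,2) by blast
qed

lemma U_mono_step:
  assumes "u \<in> signed_perms n" "DesB n u \<subseteq> {0}" "1 \<le> p" "p < int n"
  shows "u p < u (p + 1)"
proof -
  have "nat p \<notin> DesB n u" using assms(2,3) by auto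
  then have "\<not> u p > u (p + 1)" using assms(3,4) unfolding DesB_def by auto
  moreover have "u p \<noteq> u (p + 1)" using sp_inj[OF assms(1)] by force
  ultimately show ?thesis by simp
qed

lemma U_mono:
  assumes "u \<in> signed_perms n" "DesB n u \<subseteq> {0}" "1 \<le> p" "p < q" "q \<le> int n"
  shows "u p < u q"
proof -
  have "\<forall>q. p < q \<longrightarrow> q \<le> int n \<longrightarrow> q - p = int (Suc d) \<longrightarrow> u p < u q" for d
  proof (induction d)
    case 0
    show ?case
    proof (intro allI impI)
      fix q assume q: "p < q" "q \<le> int n" "q - p = int (Suc 0)"
      have "u p < u (p + 1)" using U_mono_step[OF assms(1,2,3)] q by simp
      moreover have "q = p + 1" using q by simp
      ultimately show "u p < u q" by simp
    qed
  next
    case (Suc d)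
    show ?case
    proof (intro allI impI)
      fix q assume q: "p < q" "q \<le> int n" "q - p = int (Suc (Suc d))"
      then have "u p < u (q - 1)" using Suc by auto
      also have "u (q - 1) < u (q - 1 + 1)" using q assms(3) by (intro U_mono_step[OF assms(1,2)]) auto
      finally show "u p < u q" by simp
    qed
  qed
  moreover obtain d where "q - p = int (Suc d)" using assms(4) by (metis zless_iff_Suc_zadd add_diff_cancel_left')
  ultimately show ?thesis using assms(4,5) by blast
qed

lemma U_mono_iff:
  assumes "u \<in> signed_perms n" "DesB n u \<subseteq> {0}" "p \<in> {1..int n}" "q \<in> {1..int n}"
  shows "(u p \<le> u q) = (p \<le> q)"
  using U_mono[OF assms(1,2), of p q] U_mono[OF assms(1,2), of q p] assms(3,4)
  by (cases "p < q"; cases "q < p") auto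

lemma U_surj:
  assumes u: "u \<in> signed_perms n" "DesB n u \<subseteq> {0}"
  shows "\<exists>N \<in> Pow {1..n}. u = inv (rho n N)"
proof -
  define P where "P = {1..int n}"
  define N where "N = {a \<in> {1..n}. \<exists>i \<in> P. u i = - int a}"
  have PD: "P \<subseteq> Dn n" unfolding P_def by (auto simp: Dn_iff)
  have Dn_split: "t \<in> Dn n \<Longrightarrow> t \<in> P \<or> - t \<in> P" for t unfolding P_def Dn_iff by auto
  have inT: "u i \<in> TN n N" if i: "i \<in> P" for i
  proof -
    have d: "u i \<in> Dn n" using sp_in[OF u(1)] PD i by auto
    then have nz: "u i \<noteq> 0" unfolding Dn_iff by auto
    show ?thesis
    proof (cases "u i < 0")
      case True
      then have "nat \<bar>u i\<bar> \<in> N" unfolding N_def using d i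
        by (auto simp: Dn_iff intro!: bexI[of _ i])
      then show ?thesis using d True unfolding TN_def by auto
    next
      case False
      have "nat \<bar>u i\<bar> \<notin> N"
      proof
        assume "nat \<bar>u i\<bar> \<in> N"
        then obtain j where j: "j \<in> P" "u j = - int (nat \<bar>u i\<bar>)" unfolding N_def by auto
        then have "u j = u (- i)" using False sp_odd[OF u(1)] by simp
        then have "j = - i" using sp_inj[OF u(1)] by blast
        then show False using i j unfolding P_def by auto
      qed
      then show ?thesis using d False nz unfolding TN_def by auto
    qed
  qed
  have injP: "inj_on u P" using sp_inj[OF u(1)] by (meson inj_onI)
  have TNeq: "TN n N = u ` P"
  proof -
    have "u ` P \<subseteq> TN n N" using inT by auto
    moreover have "card (u ` P) = card (TN n N)" using card_image[OF injP] card_TN unfolding P_def by simp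
    ultimately show ?thesis by (intro card_subset_eq[symmetric]) auto
  qed
  have rkP: "rk n N (u p) = nat p" if p: "p \<in> P" for p
  proof -
    have "{s \<in> TN n N. s \<le> u p} = u ` {1..p}"
    proof
      show "{s \<in> TN n N. s \<le> u p} \<subseteq> u ` {1..p}"
      proof
        fix s assume "s \<in> {s \<in> TN n N. s \<le> u p}"
        then obtain q where q: "q \<in> P" "s = u q" "u q \<le> u p" unfolding TNeq by auto
        then have "q \<le> p" using U_mono_iff[OF u, of q p] p unfolding P_def by auto
        then show "s \<in> u ` {1..p}" using q unfolding P_def by auto
      qed
      show "u ` {1..p} \<subseteq> {s \<in> TN n N. s \<le> u p}"
      proof
        fix s assume "s \<in> u ` {1..p}"
        then obtain q where q: "q \<in> {1..p}" "s = u q" by auto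
        then have qP: "q \<in> P" using p unfolding P_def by auto
        then have "u q \<le> u p" using U_mono_iff[OF u, of q p] p q unfolding P_def by auto
        then show "s \<in> {s \<in> TN n N. s \<le> u p}" using q qP TNeq by auto
      qed
    qed
    moreover have "inj_on u {1..p}" using injP p unfolding P_def by (auto simp: inj_on_def)
    ultimately show ?thesis unfolding rk_def using card_image by (metis card_atLeastAtMost_int diff_add_cancel)
  qed
  have rhou: "rho n N (u t) = t" for t
  proof (cases "t \<in> Dn n")
    case True
    show ?thesis
    proof (cases "t \<in> P")
      case True
      then show ?thesis using inT[OF True] rkP[OF True] unfolding rho_def P_def by auto
    next
      case False
      then have mt: "- t \<in> P" using Dn_split[OF \<open>t \<in> Dn n\<close>] by auto
      have "rho n N (u t) = rho n N (- u (- t))" using sp_odd[OF u(1), of "-t"] by simp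
      also have "\<dots> = - rho n N (u (-t))" by (rule rho_odd)
      also have "\<dots> = t" using inT[OF mt] rkP[OF mt] mt unfolding rho_def P_def by auto
      finally show ?thesis .
    qed
  next
    case False
    then show ?thesis using sp_out[OF u(1) False] rho_out[OF False] by simp
  qed
  have NP: "N \<in> Pow {1..n}" unfolding N_def by auto
  have "u = inv (rho n N)"
  proof (rule ext)
    fix y show "u y = inv (rho n N) y" using rhou rho_bij by (simp add: bij_inv_eq_iff)
  qed
  then show ?thesis using NP by blast
qed

lemma inv_rho_bij:
  "bij_betw (\<lambda>N. inv (rho n N)) (Pow {1..n}) {u \<in> signed_perms n. DesB n u \<subseteq> {0}}"
proof (rule bij_betwI')
  fix N M assume "N \<in> Pow {1..n}" "M \<in> Pow {1..n}"
  then show "(inv (rho n N) = inv (rho n M)) = (N = M)" using inv_rho_inj[of N n M] by auto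
next
  fix N show "inv (rho n N) \<in> {u \<in> signed_perms n. DesB n u \<subseteq> {0}}"
    using sp_inv[OF rho_sp] inv_rho_U by auto
next
  fix u assume "u \<in> {u \<in> signed_perms n. DesB n u \<subseteq> {0}}"
  then show "\<exists>N\<in>Pow {1..n}. u = inv (rho n N)" using U_surj by auto
qed

definition SW :: "nat \<Rightarrow> (int \<Rightarrow> int) \<Rightarrow> nat set \<Rightarrow> nat set" where
  "SW n w N = {i \<in> {1..n}. w (int i) \<notin> TN n N}"

definition DF :: "nat \<Rightarrow> nat set \<Rightarrow> nat set \<Rightarrow> nat set" where
  "DF n E S = {i \<in> {0..<n}. (i = 0 \<and> 1 \<in> S) \<or>
      (0 < i \<and> (((i \<in> S) = (Suc i \<in> S) \<and> i \<in> E) \<or> (i \<notin> S \<and> Suc i \<in> S)))}"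

lemma DesB_rho:
  assumes w: "w \<in> signed_perms n"
  shows "DesB n (rho n N \<circ> w) = DF n (DesB n w) (SW n w N)"
proof (rule set_eqI)
  fix i
  show "(i \<in> DesB n (rho n N \<circ> w)) = (i \<in> DF n (DesB n w) (SW n w N))"
  proof (cases "i < n")
    case False then show ?thesis unfolding DesB_def DF_def by auto
  next
    case iN: True
    show ?thesis
    proof (cases "i = 0")
      case True
      have d1: "w 1 \<in> Dn n" using sp_in[OF w] iN unfolding Dn_iff by auto
      then have nz: "rho n N (w 1) \<noteq> 0" using rho_in[OF d1, of N] unfolding Dn_iff by auto
      have r0: "rho n N (w 0) = 0" using sp_zero[OF w] rho_out[of 0 n N] by (simp add: Dn_iff)
      have "(i \<in> DesB n (rho n N \<circ> w)) = (rho n N (w 1) < 0)"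
        using True iN r0 unfolding DesB_def by auto
      also have "\<dots> = (w 1 \<notin> TN n N)" using rho_pos_iff[OF d1, of N] nz by auto
      also have "\<dots> = (1 \<in> SW n w N)" using iN unfolding SW_def by auto
      also have "\<dots> = (i \<in> DF n (DesB n w) (SW n w N))" using True iN unfolding DF_def by auto
      finally show ?thesis .
    next
      case False
      define s where "s = w (int i)"
      define t where "t = w (int i + 1)"
      have ds: "s \<in> Dn n" "t \<in> Dn n" unfolding s_def t_def using sp_in[OF w] iN False
        by (auto simp: Dn_iff)
      have "(i \<in> DesB n (rho n N \<circ> w)) = (rho n N t < rho n N s)"
        using iN unfolding DesB_def s_def t_def by auto
      also have "\<dots> = (((t \<in> TN n N) = (s \<in> TN n N) \<and> t < s) \<or> (t \<notin> TN n N \<and> s \<in> TN n N))"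
        by (rule rho_less_iff[OF ds(2,1)])
      also have "\<dots> = (i \<in> DF n (DesB n w) (SW n w N))"
      proof -
        have "(i \<in> SW n w N) = (s \<notin> TN n N)" using iN False unfolding SW_def s_def by auto
        moreover have "(Suc i \<in> SW n w N) = (t \<notin> TN n N)" using iN False unfolding SW_def t_def by (auto simp: add.commute)
        moreover have "(i \<in> DesB n w) = (t < s)" using iN unfolding DesB_def s_def t_def by auto
        ultimately show ?thesis using iN False unfolding DF_def by auto
      qed
      finally show ?thesis .
    qed
  qed
qed

lemma SW_bij:
  assumes w: "w \<in> signed_perms n"
  shows "bij_betw (SW n w) (Pow {1..n}) (Pow {1..n})"
proof -
  have inj: "inj_on (SW n w) (Pow {1..n})"
  proof (rule inj_onI)
    fix N M assume NM: "N \<in> Pow {1..n}" "M \<in> Pow {1..n}" "SW n w N = SW n w M"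
    have "a \<in> N \<longleftrightarrow> a \<in> M" if a: "a \<in> {1..n}" for a
    proof -
      have da: "int a \<in> Dn n" using a by (auto simp: Dn_iff)
      define t where "t = inv w (int a)"
      have bw: "bij w" using w sp_permutes permutes_bij by blast
      have wt: "w t = int a" unfolding t_def using bw by (simp add: surj_f_inv_f bij_is_surj)
      have td: "t \<in> Dn n" unfolding t_def using sp_in[OF sp_inv[OF w] da] .
      obtain i where i: "i \<in> {1..n}" "w (int i) = int a \<or> w (int i) = - int a"
      proof (cases "t > 0")
        case True
        then have e: "int (nat t) = t" by simp
        show ?thesis by (rule that[of "nat t"]) (use True td wt e in \<open>auto simp: Dn_iff\<close>)
      next
        case False
        then have "t < 0" using td by (auto simp: Dn_iff)
        then have e: "int (nat (- t)) = - t" by simp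
        show ?thesis by (rule that[of "nat (- t)"]) (use \<open>t < 0\<close> td wt e sp_odd[OF w, of t] in \<open>auto simp: Dn_iff\<close>)
      qed
      have wi: "w (int i) \<in> Dn n" using sp_in[OF w] i(1) by (auto simp: Dn_iff)
      have key: "(i \<in> SW n w K) = ((w (int i) < 0) \<noteq> (a \<in> K))" for K
        using i wi unfolding SW_def TN_def by auto
      show ?thesis using key[of N] key[of M] NM(3) by auto
    qed
    then show "N = M" using NM(1,2) by blast
  qed
  have sub: "SW n w ` Pow {1..n} \<subseteq> Pow {1..n}" unfolding SW_def by auto
  have "SW n w ` Pow {1..n} = Pow {1..n}" by (rule endo_inj_surj[OF _ sub inj]) simp
  then show ?thesis using inj by (simp add: bij_betw_def)
qed

lemma X0XK:
  assumes w: "w \<in> signed_perms n"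
  shows "galg_mult (signed_perms n) (XB n {0}) (XB n K) w =
         (\<Sum>S\<in>Pow {1..n}. if DF n (DesB n w) S \<subseteq> K then 1 else 0)"
proof -
  let ?G = "signed_perms n"
  let ?U = "{u \<in> ?G. DesB n u \<subseteq> {0}}"
  have "galg_mult ?G (XB n {0}) (XB n K) w = (\<Sum>u\<in>?G. XB n {0} u * XB n K (inv u \<circ> w))"
    by (rule galg_mult_sp[OF w])
  also have "\<dots> = (\<Sum>u\<in>?G. if u \<in> ?U then XB n K (inv u \<circ> w) else 0)"
    by (rule sum.cong) (auto simp: XB_apply)
  also have "\<dots> = (\<Sum>u\<in>?U. XB n K (inv u \<circ> w))"
    by (simp add: sum.inter_filter[symmetric] finite_sp)
  also have "\<dots> = (\<Sum>N\<in>Pow {1..n}. XB n K (inv (inv (rho n N)) \<circ> w))"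
    by (rule sum.reindex_bij_betw[symmetric, OF inv_rho_bij])
  also have "\<dots> = (\<Sum>N\<in>Pow {1..n}. if DF n (DesB n w) (SW n w N) \<subseteq> K then 1 else 0)"
  proof (rule sum.cong[OF refl])
    fix N
    have "inv (inv (rho n N)) = rho n N" using rho_bij by (simp add: inv_inv_eq)
    moreover have "rho n N \<circ> w \<in> ?G" using sp_comp[OF rho_sp w] .
    ultimately show "XB n K (inv (inv (rho n N)) \<circ> w) = (if DF n (DesB n w) (SW n w N) \<subseteq> K then 1 else 0)"
      by (simp add: XB_apply DesB_rho[OF w])
  qed
  also have "\<dots> = (\<Sum>S\<in>Pow {1..n}. if DF n (DesB n w) S \<subseteq> K then 1 else 0)"
    by (rule sum.reindex_bij_betw[OF SW_bij[OF w]])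
  finally show ?thesis .
qed

definition goodK :: "nat \<Rightarrow> nat set \<Rightarrow> nat set \<Rightarrow> bool" where
  "goodK n K S = (\<forall>i\<in>{1..<n}. i \<notin> K \<longrightarrow> \<not> (i \<notin> S \<and> Suc i \<in> S))"

definition QK :: "nat \<Rightarrow> nat set \<Rightarrow> nat set \<Rightarrow> nat set" where
  "QK n K S = {i \<in> {1..<n}. i \<notin> K \<and> i \<in> S \<and> Suc i \<notin> S}"

definition AK :: "nat \<Rightarrow> nat set \<Rightarrow> nat set set" where
  "AK n K = {S \<in> Pow {1..n}. (1 \<in> S \<longrightarrow> 0 \<in> K) \<and> goodK n K S}"

lemma DF_sub_iff:
  assumes "E \<subseteq> {0..<n}" "0 < n"
  shows "(DF n E S \<subseteq> K) = ((1 \<in> S \<longrightarrow> 0 \<in> K) \<and> goodK n K S \<and> E \<subseteq> insert 0 (K \<union> QK n K S))"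
proof -
  have "(DF n E S \<subseteq> K) = ((1 \<in> S \<longrightarrow> 0 \<in> K) \<and>
     (\<forall>i\<in>{1..<n}. i \<notin> K \<longrightarrow> \<not> (((i \<in> S) = (Suc i \<in> S) \<and> i \<in> E) \<or> (i \<notin> S \<and> Suc i \<in> S))))"
    unfolding DF_def using assms(2) by (auto simp: subset_iff)
  also have "\<dots> = ((1 \<in> S \<longrightarrow> 0 \<in> K) \<and> goodK n K S \<and> E \<subseteq> insert 0 (K \<union> QK n K S))"
    unfolding goodK_def QK_def using assms(1) by (auto simp: subset_iff)
  finally show ?thesis .
qed

lemma DesB_sub: "DesB n w \<subseteq> {0..<n}" unfolding DesB_def by auto

lemma L_XK:
  assumes "0 < n"
  shows "galg_mult (signed_perms n) (XB n {0}) (XB n K) =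
         (\<lambda>w. \<Sum>S\<in>AK n K. XB n (insert 0 (K \<union> QK n K S)) w)"
proof (rule ext)
  fix w
  show "galg_mult (signed_perms n) (XB n {0}) (XB n K) w = (\<Sum>S\<in>AK n K. XB n (insert 0 (K \<union> QK n K S)) w)"
  proof (cases "w \<in> signed_perms n")
    case True
    have "galg_mult (signed_perms n) (XB n {0}) (XB n K) w =
         (\<Sum>S\<in>Pow {1..n}. if DF n (DesB n w) S \<subseteq> K then 1 else 0)" by (rule X0XK[OF True])
    also have "\<dots> = (\<Sum>S\<in>Pow {1..n}. if S \<in> AK n K then XB n (insert 0 (K \<union> QK n K S)) w else 0)"
    proof (rule sum.cong[OF refl])
      fix S assume S: "S \<in> Pow {1..n}"
      have "(DF n (DesB n w) S \<subseteq> K) = (S \<in> AK n K \<and> DesB n w \<subseteq> insert 0 (K \<union> QK n K S))"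
        using S unfolding DF_sub_iff[OF DesB_sub assms] AK_def by blast
      then show "(if DF n (DesB n w) S \<subseteq> K then 1 else 0) =
          (if S \<in> AK n K then XB n (insert 0 (K \<union> QK n K S)) w else 0)"
        unfolding XB_apply using True by simp
    qed
    also have "\<dots> = (\<Sum>S\<in>{S \<in> Pow {1..n}. S \<in> AK n K}. XB n (insert 0 (K \<union> QK n K S)) w)"
      by (rule sum.inter_filter[symmetric]) simp
    also have "{S \<in> Pow {1..n}. S \<in> AK n K} = AK n K" unfolding AK_def by blast
    finally show ?thesis .
  next
    case False
    then show ?thesis by (simp add: galg_mult_sp_out XB_apply)
  qed
qed

lemma finite_AK: "finite (AK n K)" unfolding AK_def by simp

lemma QK_sub: "QK n K S \<subseteq> {1..<n} - K" unfolding QK_def by auto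

theorem partA:
  assumes "0 < n"
  shows "IB0 n = (\<lambda>y. galg_mult (signed_perms n) (XB n {0}) y) ` SigmaB n"
proof -
  let ?L = "\<lambda>y. galg_mult (signed_perms n) (XB n {0}) y"
  let ?V = "qspan (Pow {0..<n}) (\<lambda>K. ?L (XB n K))"
  have img: "?L ` SigmaB n = ?V" unfolding SigmaB_def
    by (rule qspan_image) (rule galg_mult_lin2)
  have fin1: "finite {J \<in> Pow {0..<n}. 0 \<in> J}" by simp
  have sub1: "?V \<subseteq> IB0 n" unfolding IB0_def
  proof (rule qspan_subset)
    fix K assume K: "K \<in> Pow {0..<n}"
    show "?L (XB n K) \<in> qspan {J \<in> Pow {0..<n}. 0 \<in> J} (XB n)"
      unfolding L_XK[OF assms]
    proof (rule qspan_sum[OF finite_AK])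
      fix S assume "S \<in> AK n K"
      have "insert 0 (K \<union> QK n K S) \<in> {J \<in> Pow {0..<n}. 0 \<in> J}" using K QK_sub[of n K S] assms by auto
      then show "XB n (insert 0 (K \<union> QK n K S)) \<in> qspan {J \<in> Pow {0..<n}. 0 \<in> J} (XB n)"
        by (rule qspan_gen[OF fin1])
    qed
  qed simp
  have gen: "XB n J \<in> ?V" if "J \<subseteq> {0..<n}" "0 \<in> J" for J
  proof -
    have "\<forall>J. J \<subseteq> {0..<n} \<longrightarrow> 0 \<in> J \<longrightarrow> card ({0..<n} - J) = m \<longrightarrow> XB n J \<in> ?V" for m
    proof (induction m rule: less_induct)
      case (less m)
      show ?case
      proof (intro allI impI)
        fix J assume J: "J \<subseteq> {0..<n}" "0 \<in> J" "card ({0..<n} - J) = m"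
        define A1 where "A1 = {S \<in> AK n J. QK n J S = {}}"
        define A2 where "A2 = {S \<in> AK n J. QK n J S \<noteq> {}}"
        have fA1: "finite A1" "finite A2" unfolding A1_def A2_def using finite_AK by auto
        have AU: "AK n J = A1 \<union> A2" "A1 \<inter> A2 = {}" unfolding A1_def A2_def by auto
        have e1: "{} \<in> A1" unfolding A1_def AK_def goodK_def QK_def by auto
        then have c1: "card A1 \<noteq> 0" using fA1(1) by auto
        have ins: "insert 0 (J \<union> QK n J S) = J \<union> QK n J S" for S using J(2) by auto
        have IH: "XB n (J \<union> QK n J S) \<in> ?V" if S: "S \<in> A2" for S
        proof -
          have Qne: "QK n J S \<noteq> {}" using S unfolding A2_def by auto
          have Qs: "QK n J S \<subseteq> {1..<n} - J" by (rule QK_sub)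
          obtain x where x: "x \<in> QK n J S" using Qne by blast
          then have "x \<in> {0..<n} - J" "x \<notin> {0..<n} - (J \<union> QK n J S)" using Qs by auto
          then have "{0..<n} - (J \<union> QK n J S) \<subset> {0..<n} - J" by blast
          then have "card ({0..<n} - (J \<union> QK n J S)) < card ({0..<n} - J)"
            by (intro psubset_card_mono) auto
          then have "card ({0..<n} - (J \<union> QK n J S)) < m" using J(3) by simp
          moreover have "J \<union> QK n J S \<subseteq> {0..<n}" "0 \<in> J \<union> QK n J S" using J Qs by auto
          ultimately show ?thesis using less by blast
        qed
        have LJ: "?L (XB n J) = (\<lambda>w. of_nat (card A1) * XB n J w + (\<Sum>S\<in>A2. XB n (J \<union> QK n J S) w))"
        proof (rule ext)
          fix w
          have "?L (XB n J) w = (\<Sum>S\<in>AK n J. XB n (J \<union> QK n J S) w)"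
            unfolding L_XK[OF assms] ins ..
          also have "\<dots> = (\<Sum>S\<in>A1. XB n (J \<union> QK n J S) w) + (\<Sum>S\<in>A2. XB n (J \<union> QK n J S) w)"
            unfolding AU(1) by (rule sum.union_disjoint[OF fA1 AU(2)])
          also have "(\<Sum>S\<in>A1. XB n (J \<union> QK n J S) w) = (\<Sum>S\<in>A1. XB n J w)"
            by (rule sum.cong) (auto simp: A1_def)
          also have "\<dots> = of_nat (card A1) * XB n J w" by simp
          finally show "?L (XB n J) w = of_nat (card A1) * XB n J w + (\<Sum>S\<in>A2. XB n (J \<union> QK n J S) w)" .
        qed
        have "XB n J = (\<lambda>w. (1 / of_nat (card A1)) * (?L (XB n J) w - (\<Sum>S\<in>A2. XB n (J \<union> QK n J S) w)))"
          using c1 unfolding LJ by (auto simp: fun_eq_iff)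
        also have "\<dots> \<in> ?V"
          by (intro qspan_smult qspan_diff qspan_gen qspan_sum[OF fA1(2)] IH) (use J in auto)
        finally show "XB n J \<in> ?V" .
      qed
    qed
    then show ?thesis using that by blast
  qed
  have sub2: "IB0 n \<subseteq> ?V" unfolding IB0_def
    by (rule qspan_subset[OF fin1]) (use gen in auto)
  show ?thesis using sub1 sub2 img by auto
qed

definition ab :: "(int \<Rightarrow> int) \<Rightarrow> (nat \<Rightarrow> nat)" where
  "ab w = (\<lambda>i. nat \<bar>w (int i)\<bar>)"

definition phi :: "nat \<Rightarrow> ((int \<Rightarrow> int) \<Rightarrow> rat) \<Rightarrow> ((nat \<Rightarrow> nat) \<Rightarrow> rat)" where
  "phi n a = (\<lambda>x. \<Sum>w\<in>{w \<in> signed_perms n. ab w = x}. a w)"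

lemma finite_sym: "finite (sym_perms n)"
  unfolding sym_perms_def using finite_permutations[of "{1..n}"] by simp

lemma sym_comp: "u \<in> sym_perms n \<Longrightarrow> v \<in> sym_perms n \<Longrightarrow> u \<circ> v \<in> sym_perms n"
  unfolding sym_perms_def by (metis mem_Collect_eq permutes_compose)

lemma galg_mult_sym_out: "x \<notin> sym_perms n \<Longrightarrow> galg_mult (sym_perms n) a b x = 0"
  by (rule galg_mult_out) (simp_all add: sym_comp)

lemma ab_sp: assumes w: "w \<in> signed_perms n" shows "ab w \<in> sym_perms n"
proof -
  have inj: "inj_on (ab w) {1..n}"
  proof (rule inj_onI)
    fix i j assume ij: "i \<in> {1..n}" "j \<in> {1..n}" "ab w i = ab w j"
    then have "\<bar>w (int i)\<bar> = \<bar>w (int j)\<bar>" unfolding ab_def by auto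
    then have "w (int i) = w (int j) \<or> w (int i) = w (- int j)" using sp_odd[OF w] by (auto simp: abs_eq_iff)
    then have "int i = int j \<or> int i = - int j" using sp_inj[OF w] by blast
    then show "i = j" using ij by auto
  qed
  have sub: "ab w ` {1..n} \<subseteq> {1..n}"
  proof
    fix y assume "y \<in> ab w ` {1..n}"
    then obtain i where i: "i \<in> {1..n}" "y = ab w i" by auto
    have "w (int i) \<in> Dn n" using sp_in[OF w] i(1) by (auto simp: Dn_iff)
    then show "y \<in> {1..n}" using i unfolding ab_def Dn_iff by auto
  qed
  have "ab w ` {1..n} = {1..n}" by (rule endo_inj_surj[OF _ sub inj]) simp
  then have "bij_betw (ab w) {1..n} {1..n}" using inj by (simp add: bij_betw_def)
  moreover have "ab w i = i" if "i \<notin> {1..n}" for i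
  proof (cases "i = 0")
    case True then show ?thesis using sp_zero[OF w] unfolding ab_def by simp
  next
    case False
    then have "int i \<notin> Dn n" using that by (auto simp: Dn_iff)
    then show ?thesis using sp_out[OF w] unfolding ab_def by simp
  qed
  ultimately have "ab w permutes {1..n}" by (rule bij_imp_permutes)
  then show ?thesis unfolding sym_perms_def by simp
qed

lemma ab_comp: assumes "u \<in> signed_perms n" "v \<in> signed_perms n" shows "ab (u \<circ> v) = ab u \<circ> ab v"
proof (rule ext)
  fix i
  have "\<bar>u (v (int i))\<bar> = \<bar>u (int (nat \<bar>v (int i)\<bar>))\<bar>"
  proof (cases "v (int i) \<ge> 0")
    case True then show ?thesis by simp
  next
    case False
    then have "v (int i) = - int (nat \<bar>v (int i)\<bar>)" by simp
    then have "u (v (int i)) = - u (int (nat \<bar>v (int i)\<bar>))" using sp_odd[OF assms(1)] by metis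
    then show ?thesis by simp
  qed
  then show "ab (u \<circ> v) i = (ab u \<circ> ab v) i" unfolding ab_def by simp
qed

lemma fiber_sum:
  assumes "finite A" "finite T" "f ` A \<subseteq> T"
  shows "(\<Sum>y\<in>T. \<Sum>x\<in>{x \<in> A. f x = y}. g x y) = (\<Sum>x\<in>A. g x (f x))"
proof -
  have "(\<Sum>y\<in>T. \<Sum>x\<in>{x \<in> A. f x = y}. g x y) = (\<Sum>y\<in>T. \<Sum>x\<in>{x. x \<in> A \<and> f x = y}. g x (f x))"
    by (intro sum.cong refl) auto
  also have "\<dots> = (\<Sum>x\<in>A. g x (f x))" by (rule sum.group[OF assms])
  finally show ?thesis .
qed

lemma triple_prod:
  fixes c :: rat
  shows "c * sum f A * sum g B = (\<Sum>u\<in>A. \<Sum>v\<in>B. c * f u * g v)"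
proof -
  have "c * sum f A * sum g B = c * (sum f A * sum g B)" by simp
  also have "\<dots> = c * (\<Sum>u\<in>A. \<Sum>v\<in>B. f u * g v)" by (simp only: sum_product)
  also have "\<dots> = (\<Sum>u\<in>A. \<Sum>v\<in>B. c * (f u * g v))" by (simp only: sum_distrib_left)
  also have "\<dots> = (\<Sum>u\<in>A. \<Sum>v\<in>B. c * f u * g v)" by (simp only: mult.assoc)
  finally show ?thesis .
qed

lemma ab_img: "ab ` signed_perms n \<subseteq> sym_perms n" using ab_sp by blast

lemma phi_hom:
  "phi n (galg_mult (signed_perms n) a b) = galg_mult (sym_perms n) (phi n a) (phi n b)"
proof (rule ext)
  fix x
  let ?B = "signed_perms n" and ?S = "sym_perms n"
  have fB: "finite ?B" by (rule finite_sp)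
  have fS: "finite ?S" by (rule finite_sym)
  have "phi n (galg_mult ?B a b) x =
      (\<Sum>w\<in>{w \<in> ?B. ab w = x}. \<Sum>u\<in>?B. \<Sum>v\<in>?B. of_bool (u \<circ> v = w) * a u * b v)"
    unfolding phi_def galg_mult_alt ..
  also have "\<dots> = (\<Sum>u\<in>?B. \<Sum>v\<in>?B. \<Sum>w\<in>{w \<in> ?B. ab w = x}. of_bool (u \<circ> v = w) * a u * b v)"
  proof -
    have "(\<Sum>w\<in>{w \<in> ?B. ab w = x}. \<Sum>u\<in>?B. \<Sum>v\<in>?B. of_bool (u \<circ> v = w) * a u * b v) =
      (\<Sum>u\<in>?B. \<Sum>w\<in>{w \<in> ?B. ab w = x}. \<Sum>v\<in>?B. of_bool (u \<circ> v = w) * a u * b v)"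
      by (rule sum.swap)
    also have "\<dots> = (\<Sum>u\<in>?B. \<Sum>v\<in>?B. \<Sum>w\<in>{w \<in> ?B. ab w = x}. of_bool (u \<circ> v = w) * a u * b v)"
      by (rule sum.cong[OF refl]) (rule sum.swap)
    finally show ?thesis .
  qed
  also have "\<dots> = (\<Sum>u\<in>?B. \<Sum>v\<in>?B. of_bool (ab (u \<circ> v) = x) * a u * b v)"
  proof (intro sum.cong refl)
    fix u v assume uv: "u \<in> ?B" "v \<in> ?B"
    have "(\<Sum>w\<in>{w \<in> ?B. ab w = x}. of_bool (u \<circ> v = w) * a u * b v) =
          (\<Sum>w\<in>{w \<in> ?B. ab w = x}. if w = u \<circ> v then a u * b v else 0)"
      by (intro sum.cong refl) auto
    also have "\<dots> = (if u \<circ> v \<in> {w \<in> ?B. ab w = x} then a u * b v else 0)"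
      using fB by (simp add: sum.delta')
    also have "\<dots> = of_bool (ab (u \<circ> v) = x) * a u * b v" using sp_comp[OF uv] by simp
    finally show "(\<Sum>w\<in>{w \<in> ?B. ab w = x}. of_bool (u \<circ> v = w) * a u * b v) = of_bool (ab (u \<circ> v) = x) * a u * b v" .
  qed
  also have "\<dots> = (\<Sum>u\<in>?B. \<Sum>v\<in>?B. of_bool (ab u \<circ> ab v = x) * a u * b v)"
    by (intro sum.cong refl) (simp add: ab_comp)
  also have "\<dots> = (\<Sum>u'\<in>?S. \<Sum>u\<in>{u \<in> ?B. ab u = u'}. \<Sum>v\<in>?B. of_bool (u' \<circ> ab v = x) * a u * b v)"
    by (rule fiber_sum[OF fB fS ab_img, symmetric])
  also have "\<dots> = (\<Sum>u'\<in>?S. \<Sum>u\<in>{u \<in> ?B. ab u = u'}. \<Sum>v'\<in>?S. \<Sum>v\<in>{v \<in> ?B. ab v = v'}. of_bool (u' \<circ> v' = x) * a u * b v)"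
    by (intro sum.cong refl) (rule fiber_sum[OF fB fS ab_img, symmetric])
  also have "\<dots> = (\<Sum>u'\<in>?S. \<Sum>v'\<in>?S. of_bool (u' \<circ> v' = x) * phi n a u' * phi n b v')"
  proof (rule sum.cong[OF refl])
    fix u' assume "u' \<in> ?S"
    have "(\<Sum>v'\<in>?S. of_bool (u' \<circ> v' = x) * phi n a u' * phi n b v') =
          (\<Sum>v'\<in>?S. \<Sum>u\<in>{u \<in> ?B. ab u = u'}. \<Sum>v\<in>{v \<in> ?B. ab v = v'}. of_bool (u' \<circ> v' = x) * a u * b v)"
    proof (rule sum.cong[OF refl])
      fix v'
      show "of_bool (u' \<circ> v' = x) * phi n a u' * phi n b v' =
          (\<Sum>u\<in>{u \<in> ?B. ab u = u'}. \<Sum>v\<in>{v \<in> ?B. ab v = v'}. of_bool (u' \<circ> v' = x) * a u * b v)"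
        unfolding phi_def by (rule triple_prod)
    qed
    also have "\<dots> = (\<Sum>u\<in>{u \<in> ?B. ab u = u'}. \<Sum>v'\<in>?S. \<Sum>v\<in>{v \<in> ?B. ab v = v'}. of_bool (u' \<circ> v' = x) * a u * b v)"
      by (rule sum.swap)
    finally show "(\<Sum>u\<in>{u \<in> ?B. ab u = u'}. \<Sum>v'\<in>?S. \<Sum>v\<in>{v \<in> ?B. ab v = v'}. of_bool (u' \<circ> v' = x) * a u * b v) =
       (\<Sum>v'\<in>?S. of_bool (u' \<circ> v' = x) * phi n a u' * phi n b v')" by simp
  qed
  also have "\<dots> = galg_mult ?S (phi n a) (phi n b) x" unfolding galg_mult_alt ..
  finally show "phi n (galg_mult ?B a b) x = galg_mult ?S (phi n a) (phi n b) x" .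
qed

lemma phi_lin:
  "phi n (\<lambda>w. \<Sum>i\<in>I. c i * X i w) = (\<lambda>x. \<Sum>i\<in>I. c i * phi n (X i) x)"
  unfolding phi_def
proof (rule ext)
  fix x
  show "(\<Sum>w\<in>{w \<in> signed_perms n. ab w = x}. \<Sum>i\<in>I. c i * X i w) =
        (\<Sum>i\<in>I. c i * (\<Sum>w\<in>{w \<in> signed_perms n. ab w = x}. X i w))"
    unfolding sum_distrib_left by (rule sum.swap)
qed

lemma phi_smult_lin:
  "(\<lambda>z x. r * phi n z x) (\<lambda>w. \<Sum>i\<in>I. c i * X i w) = (\<lambda>x. \<Sum>i\<in>I. c i * (\<lambda>z x. r * phi n z x) (X i) x)"
  by (simp add: phi_lin sum_distrib_left mult_ac)

definition sg :: "nat \<Rightarrow> (nat \<Rightarrow> nat) \<Rightarrow> nat set \<Rightarrow> int \<Rightarrow> int" where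
  "sg n x S t = (if t \<in> Dn n then sgn t * (if nat \<bar>t\<bar> \<in> S then -1 else 1) * int (x (nat \<bar>t\<bar>)) else t)"

lemma sym_permutes: "x \<in> sym_perms n \<Longrightarrow> x permutes {1..n}" unfolding sym_perms_def by simp

lemma sym_range: "x \<in> sym_perms n \<Longrightarrow> i \<in> {1..n} \<Longrightarrow> x i \<in> {1..n}"
  by (metis sym_permutes permutes_in_image)

lemma sym_zero: "x \<in> sym_perms n \<Longrightarrow> x 0 = 0"
  by (metis sym_permutes permutes_not_in atLeastAtMost_iff not_one_le_zero)

lemma sym_inj: "x \<in> sym_perms n \<Longrightarrow> x i = x j \<Longrightarrow> i = j"
  by (metis sym_permutes permutes_inj injD)

lemma sg_pos: "i \<in> {1..n} \<Longrightarrow> sg n x S (int i) = (if i \<in> S then - int (x i) else int (x i))"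
  unfolding sg_def by (auto simp: Dn_iff)

lemma sg_abs: assumes "t \<in> Dn n" shows "\<bar>sg n x S t\<bar> = int (x (nat \<bar>t\<bar>))"
proof -
  have "t \<noteq> 0" using assms by (auto simp: Dn_iff)
  then have "\<bar>sgn t\<bar> = (1::int)" by (simp add: abs_sgn_eq_1)
  moreover have "\<bar>(if nat \<bar>t\<bar> \<in> S then -1 else 1)\<bar> = (1::int)" by simp
  ultimately show ?thesis using assms unfolding sg_def by (simp only: if_True abs_mult) simp
qed

lemma sg_sp: assumes x: "x \<in> sym_perms n" shows "sg n x S \<in> signed_perms n"
proof (rule sp_intro)
  have rng: "x (nat \<bar>t\<bar>) \<in> {1..n}" if "t \<in> Dn n" for t
  proof -
    have "nat \<bar>t\<bar> \<in> {1..n}" using that by (auto simp: Dn_iff)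
    then show ?thesis by (rule sym_range[OF x])
  qed
  have inj: "inj_on (sg n x S) (Dn n)"
  proof (rule inj_onI)
    fix s t assume st: "s \<in> Dn n" "t \<in> Dn n" "sg n x S s = sg n x S t"
    then have "int (x (nat \<bar>s\<bar>)) = int (x (nat \<bar>t\<bar>))" using sg_abs by metis
    then have "nat \<bar>s\<bar> = nat \<bar>t\<bar>" using sym_inj[OF x] by simp
    then have a: "\<bar>s\<bar> = \<bar>t\<bar>" by simp
    have p: "0 < x (nat \<bar>s\<bar>)" using rng[OF st(1)] by auto
    define e :: int where "e = (if nat \<bar>s\<bar> \<in> S then -1 else 1) * int (x (nat \<bar>s\<bar>))"
    have "sgn s * e = sgn t * e"
      using st(1,2,3) a unfolding sg_def e_def by (simp add: mult.assoc)
    moreover have "e \<noteq> 0" using p unfolding e_def by simp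
    ultimately have "sgn s = sgn t" by simp
    then have "sgn s * \<bar>s\<bar> = sgn t * \<bar>t\<bar>" using a by simp
    then show "s = t" by (simp only: mult_sgn_abs)
  qed
  have sub: "sg n x S ` Dn n \<subseteq> Dn n"
  proof
    fix y assume "y \<in> sg n x S ` Dn n"
    then obtain t where t: "t \<in> Dn n" "y = sg n x S t" by auto
    then have "\<bar>y\<bar> = int (x (nat \<bar>t\<bar>))" using sg_abs by simp
    then show "y \<in> Dn n" using rng[OF t(1)] by (auto simp: Dn_iff)
  qed
  have "sg n x S ` Dn n = Dn n" by (rule endo_inj_surj[OF finite_Dn sub inj])
  then have "bij_betw (sg n x S) (Dn n) (Dn n)" using inj by (simp add: bij_betw_def)
  then show "sg n x S permutes Dn n" by (rule bij_imp_permutes) (simp add: sg_def)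
next
  fix i show "sg n x S (- i) = - sg n x S i"
  proof (cases "i \<in> Dn n")
    case True then show ?thesis unfolding sg_def by (simp add: sgn_minus)
  next
    case False then show ?thesis unfolding sg_def by simp
  qed
qed

lemma ab_sg: assumes x: "x \<in> sym_perms n" shows "ab (sg n x S) = x"
proof (rule ext)
  fix i
  show "ab (sg n x S) i = x i"
  proof (cases "i \<in> {1..n}")
    case True then show ?thesis unfolding ab_def by (simp add: sg_pos)
  next
    case False
    then have "int i \<notin> Dn n" by (auto simp: Dn_iff)
    moreover have "x i = i" using False by (metis sym_permutes[OF x] permutes_not_in)
    ultimately show ?thesis unfolding ab_def sg_def by simp
  qed
qed

lemma fiber_bij:
  assumes x: "x \<in> sym_perms n"
  shows "bij_betw (sg n x) (Pow {1..n}) {w \<in> signed_perms n. ab w = x}"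
proof (rule bij_betwI')
  fix S S' assume SS: "S \<in> Pow {1..n}" "S' \<in> Pow {1..n}"
  show "(sg n x S = sg n x S') = (S = S')"
  proof
    assume e: "sg n x S = sg n x S'"
    have "i \<in> S \<longleftrightarrow> i \<in> S'" if i: "i \<in> {1..n}" for i
    proof -
      have "0 < x i" using sym_range[OF x i] by auto
      then have "(i \<in> S) = (sg n x S (int i) < 0)" "(i \<in> S') = (sg n x S' (int i) < 0)"
        using i by (auto simp: sg_pos)
      then show ?thesis using e by simp
    qed
    then show "S = S'" using SS by blast
  qed simp
next
  fix S show "sg n x S \<in> {w \<in> signed_perms n. ab w = x}" using sg_sp[OF x] ab_sg[OF x] by simp
next
  fix w assume w: "w \<in> {w \<in> signed_perms n. ab w = x}"
  then have ws: "w \<in> signed_perms n" and wx: "ab w = x" by auto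
  define S where "S = {i \<in> {1..n}. w (int i) < 0}"
  have "w = sg n x S"
  proof (rule ext)
    fix t
    show "w t = sg n x S t"
    proof (cases "t \<in> Dn n")
      case True
      define i where "i = nat \<bar>t\<bar>"
      have i: "i \<in> {1..n}" using True unfolding i_def by (auto simp: Dn_iff)
      have "x i = nat \<bar>w (int i)\<bar>" using wx unfolding ab_def by auto
      then have ai: "\<bar>w (int i)\<bar> = int (x i)" by simp
      have iS: "(i \<in> S) = (w (int i) < 0)" using i by (simp add: S_def)
      have wi: "w (int i) = (if i \<in> S then - int (x i) else int (x i))"
      proof (cases "w (int i) < 0")
        case True then show ?thesis using iS ai by simp
      next
        case False then show ?thesis using iS ai by simp
      qed
      have "w t = sgn t * w (int i)"
      proof (cases "t > 0")
        case True then show ?thesis unfolding i_def by simp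
      next
        case False
        then have "t < 0" using \<open>t \<in> Dn n\<close> by (auto simp: Dn_iff)
        then have "t = - int i" unfolding i_def by simp
        then show ?thesis using sp_odd[OF ws] \<open>t < 0\<close> by simp
      qed
      also have "\<dots> = sgn t * (if i \<in> S then -1 else 1) * int (x i)" using wi by simp
      finally show ?thesis using True unfolding sg_def i_def by simp
    next
      case False
      then show ?thesis using sp_out[OF ws False] unfolding sg_def by simp
    qed
  qed
  moreover have "S \<in> Pow {1..n}" unfolding S_def by auto
  ultimately show "\<exists>S\<in>Pow {1..n}. w = sg n x S" by blast
qed

lemma phi_XB_sum:
  assumes x: "x \<in> sym_perms n"
  shows "phi n (XB n K) x = (\<Sum>S\<in>Pow {1..n}. if DesB n (sg n x S) \<subseteq> K then 1 else 0)"
proof -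
  have "phi n (XB n K) x = (\<Sum>S\<in>Pow {1..n}. XB n K (sg n x S))"
    unfolding phi_def by (rule sum.reindex_bij_betw[OF fiber_bij[OF x], symmetric])
  also have "\<dots> = (\<Sum>S\<in>Pow {1..n}. if DesB n (sg n x S) \<subseteq> K then 1 else 0)"
    by (rule sum.cong[OF refl]) (simp add: XB_apply sg_sp[OF x])
  finally show ?thesis .
qed

lemma phi_out: "x \<notin> sym_perms n \<Longrightarrow> phi n a x = 0"
  unfolding phi_def using ab_sp by (intro sum.neutral) auto

definition Fp :: "nat \<Rightarrow> (nat \<Rightarrow> nat) \<Rightarrow> nat set \<Rightarrow> nat set" where
  "Fp n x K = Suc ` {i \<in> {0..<n}. i \<notin> K \<and> x i < x (Suc i)}"

definition Fm :: "nat \<Rightarrow> (nat \<Rightarrow> nat) \<Rightarrow> nat set \<Rightarrow> nat set" where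
  "Fm n x K = {i \<in> {0..<n}. i \<notin> K \<and> x (Suc i) < x i}"

definition TH :: "nat \<Rightarrow> nat set \<Rightarrow> ((nat \<Rightarrow> nat) \<Rightarrow> rat)" where
  "TH n K = gsum {x \<in> sym_perms n. \<forall>p\<in>Peak n x. p \<in> K \<or> p - 1 \<in> K}"

lemma x_pos: "x \<in> sym_perms n \<Longrightarrow> i \<in> {1..n} \<Longrightarrow> 1 \<le> x i"
  using sym_range by fastforce

lemma x_neq: assumes x: "x \<in> sym_perms n" and i: "i < n" shows "x i \<noteq> x (Suc i)"
proof (cases "i = 0")
  case True
  then show ?thesis using sym_zero[OF x] x_pos[OF x, of 1] i by auto
next
  case False
  then show ?thesis using sym_inj[OF x, of i "Suc i"] by auto
qed

lemma sg_desc: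
  assumes x: "x \<in> sym_perms n" and i: "i < n"
  shows "(sg n x S (int i + 1) < sg n x S (int i)) =
         ((x i < x (Suc i) \<and> Suc i \<in> S) \<or> (x (Suc i) < x i \<and> i \<notin> S))"
proof -
  have e2: "sg n x S (int i + 1) = (if Suc i \<in> S then - int (x (Suc i)) else int (x (Suc i)))"
    using sg_pos[of "Suc i" n x S] i by (simp add: add.commute)
  have p2: "1 \<le> x (Suc i)" using x_pos[OF x, of "Suc i"] i by simp
  show ?thesis
  proof (cases "i = 0")
    case True
    have e1: "sg n x S (int i) = 0" using True unfolding sg_def by (simp add: Dn_iff)
    have "x i = 0" using True sym_zero[OF x] by simp
    then show ?thesis using e1 e2 p2 by auto
  next
    case False
    have e1: "sg n x S (int i) = (if i \<in> S then - int (x i) else int (x i))"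
      using sg_pos[of i n x S] i False by simp
    have p1: "1 \<le> x i" using x_pos[OF x, of i] i False by simp
    have ne: "x i \<noteq> x (Suc i)" by (rule x_neq[OF x i])
    show ?thesis
    proof (cases "i \<in> S"; cases "Suc i \<in> S")
      assume "i \<in> S" "Suc i \<in> S" then show ?thesis using e1 e2 p1 p2 ne by auto
    next
      assume "i \<in> S" "Suc i \<notin> S" then show ?thesis using e1 e2 p1 p2 ne by auto
    next
      assume "i \<notin> S" "Suc i \<in> S" then show ?thesis using e1 e2 p1 p2 ne by auto
    next
      assume "i \<notin> S" "Suc i \<notin> S" then show ?thesis using e1 e2 p1 p2 ne by auto
    qed
  qed
qed

lemma DesB_sg:
  assumes x: "x \<in> sym_perms n"
  shows "(DesB n (sg n x S) \<subseteq> K) = (Fm n x K \<subseteq> S \<and> S \<inter> Fp n x K = {})"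
proof -
  have "(DesB n (sg n x S) \<subseteq> K) =
        (\<forall>i<n. i \<notin> K \<longrightarrow> \<not> ((x i < x (Suc i) \<and> Suc i \<in> S) \<or> (x (Suc i) < x i \<and> i \<notin> S)))"
    unfolding DesB_def using sg_desc[OF x] by auto
  also have "\<dots> = (Fm n x K \<subseteq> S \<and> S \<inter> Fp n x K = {})"
    unfolding Fm_def Fp_def by auto
  finally show ?thesis .
qed

lemma count_sets:
  assumes "finite U" "A \<subseteq> U" "B \<subseteq> U" "A \<inter> B = {}"
  shows "card {S \<in> Pow U. A \<subseteq> S \<and> S \<inter> B = {}} = 2 ^ (card U - card A - card B)"
proof -
  have "bij_betw (\<lambda>T. T \<union> A) (Pow (U - A - B)) {S \<in> Pow U. A \<subseteq> S \<and> S \<inter> B = {}}"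
  proof (rule bij_betwI')
    fix T T' assume "T \<in> Pow (U - A - B)" "T' \<in> Pow (U - A - B)"
    then show "(T \<union> A = T' \<union> A) = (T = T')" by blast
  next
    fix T assume "T \<in> Pow (U - A - B)"
    then show "T \<union> A \<in> {S \<in> Pow U. A \<subseteq> S \<and> S \<inter> B = {}}" using assms by auto
  next
    fix S assume S: "S \<in> {S \<in> Pow U. A \<subseteq> S \<and> S \<inter> B = {}}"
    then have "S - A \<in> Pow (U - A - B)" "S = (S - A) \<union> A" by auto
    then show "\<exists>T\<in>Pow (U - A - B). S = T \<union> A" by blast
  qed
  then have "card {S \<in> Pow U. A \<subseteq> S \<and> S \<inter> B = {}} = card (Pow (U - A - B))"
    by (simp add: bij_betw_same_card)
  also have "\<dots> = 2 ^ card (U - A - B)" using assms(1) by (simp add: card_Pow)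
  also have "card (U - A - B) = card U - card A - card B"
  proof -
    have "card (U - A) = card U - card A" using assms by (simp add: card_Diff_subset finite_subset)
    moreover have "B \<subseteq> U - A" using assms by auto
    moreover have "finite B" using assms finite_subset by blast
    ultimately show ?thesis by (simp add: card_Diff_subset)
  qed
  finally show ?thesis .
qed

lemma Fm_sub: assumes x: "x \<in> sym_perms n" shows "Fm n x K \<subseteq> {1..n}"
proof
  fix i assume "i \<in> Fm n x K"
  then have i: "i < n" "x (Suc i) < x i" unfolding Fm_def by auto
  then have "i \<noteq> 0" using sym_zero[OF x] by (metis not_less0)
  then show "i \<in> {1..n}" using i by auto
qed

lemma Fp_sub: "Fp n x K \<subseteq> {1..n}"
  unfolding Fp_def by auto

lemma card_FmFp:
  assumes x: "x \<in> sym_perms n" and K: "K \<subseteq> {0..<n}"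
  shows "card (Fm n x K) + card (Fp n x K) = n - card K"
proof -
  define Ap where "Ap = {i \<in> {0..<n}. i \<notin> K \<and> x i < x (Suc i)}"
  have "card (Fp n x K) = card Ap" unfolding Fp_def Ap_def by (simp add: card_image)
  moreover have "Fm n x K \<union> Ap = {0..<n} - K"
  proof -
    have d: "\<And>i. i < n \<Longrightarrow> \<not> x i < x (Suc i) \<Longrightarrow> x (Suc i) < x i"
      using x_neq[OF x] by (meson linorder_neqE_nat)
    show ?thesis unfolding Fm_def Ap_def using d by auto
  qed
  moreover have "Fm n x K \<inter> Ap = {}" unfolding Fm_def Ap_def by auto
  moreover have "finite (Fm n x K)" "finite Ap" unfolding Fm_def Ap_def by auto
  ultimately have "card (Fm n x K) + card (Fp n x K) = card ({0..<n} - K)"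
    by (metis card_Un_disjoint)
  also have "\<dots> = n - card K" using K by (simp add: card_Diff_subset finite_subset)
  finally show ?thesis .
qed

lemma FmFp_disj:
  assumes x: "x \<in> sym_perms n"
  shows "(Fm n x K \<inter> Fp n x K = {}) = (\<forall>p\<in>Peak n x. p \<in> K \<or> p - 1 \<in> K)"
proof -
  have "p \<in> Fm n x K \<inter> Fp n x K \<longleftrightarrow> p \<in> Peak n x \<and> p \<notin> K \<and> p - 1 \<notin> K" for p
  proof
    assume "p \<in> Fm n x K \<inter> Fp n x K"
    then obtain i where "p = Suc i" "i < n" "i \<notin> K" "x i < x (Suc i)" "p < n" "p \<notin> K" "x (Suc p) < x p"
      unfolding Fm_def Fp_def by auto
    then show "p \<in> Peak n x \<and> p \<notin> K \<and> p - 1 \<notin> K" unfolding Peak_def by auto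
  next
    assume a: "p \<in> Peak n x \<and> p \<notin> K \<and> p - 1 \<notin> K"
    then have p: "1 \<le> p" "p < n" "x (p - 1) < x p" "x (p + 1) < x p" unfolding Peak_def by auto
    then have "p \<in> Fm n x K" using a unfolding Fm_def by auto
    moreover have "p - 1 \<in> {i \<in> {0..<n}. i \<notin> K \<and> x i < x (Suc i)}" using p a by auto
    then have "Suc (p - 1) \<in> Fp n x K" unfolding Fp_def by blast
    then have "p \<in> Fp n x K" using p by simp
    ultimately show "p \<in> Fm n x K \<inter> Fp n x K" by blast
  qed
  then show ?thesis by blast
qed

lemma phi_XB:
  assumes K: "K \<subseteq> {0..<n}"
  shows "phi n (XB n K) = (\<lambda>x. 2 ^ card K * TH n K x)"
proof (rule ext)
  fix x
  show "phi n (XB n K) x = 2 ^ card K * TH n K x"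
  proof (cases "x \<in> sym_perms n")
    case False
    then show ?thesis by (simp add: phi_out TH_def gsum_def)
  next
    case x: True
    have "phi n (XB n K) x = (\<Sum>S\<in>Pow {1..n}. if Fm n x K \<subseteq> S \<and> S \<inter> Fp n x K = {} then 1 else 0)"
      unfolding phi_XB_sum[OF x] DesB_sg[OF x] ..
    also have "\<dots> = (\<Sum>S\<in>{S \<in> Pow {1..n}. Fm n x K \<subseteq> S \<and> S \<inter> Fp n x K = {}}. 1)"
      by (rule sum.inter_filter[symmetric]) simp
    also have "\<dots> = of_nat (card {S \<in> Pow {1..n}. Fm n x K \<subseteq> S \<and> S \<inter> Fp n x K = {}})" by simp
    also have "\<dots> = 2 ^ card K * TH n K x"
    proof (cases "Fm n x K \<inter> Fp n x K = {}")
      case True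
      have "card {S \<in> Pow {1..n}. Fm n x K \<subseteq> S \<and> S \<inter> Fp n x K = {}} = 2 ^ (n - card (Fm n x K) - card (Fp n x K))"
        using count_sets[OF _ Fm_sub[OF x] Fp_sub True] by simp
      also have "n - card (Fm n x K) - card (Fp n x K) = card K"
        using card_FmFp[OF x K] card_mono[OF _ K] by simp
      moreover have "TH n K x = 1" using True FmFp_disj[OF x, of K] x by (simp add: TH_def gsum_def)
      ultimately show ?thesis by simp
    next
      case False
      then have "{S \<in> Pow {1..n}. Fm n x K \<subseteq> S \<and> S \<inter> Fp n x K = {}} = {}" by blast
      moreover have "\<not> (\<forall>p\<in>Peak n x. p \<in> K \<or> p - 1 \<in> K)" using False FmFp_disj[OF x, of K] by simp
      then have "TH n K x = 0" by (simp add: TH_def gsum_def)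
      ultimately show ?thesis by simp
    qed
    finally show ?thesis .
  qed
qed

lemma PP_apply: "PP n F x = (if x \<in> sym_perms n \<and> Peak n x = F then 1 else 0)"
  unfolding PP_def gsum_def by auto

lemma PPC_apply: "PPC n F x = (if x \<in> sym_perms n \<and> PeakC n x = F then 1 else 0)"
  unfolding PPC_def gsum_def by auto

lemma TH_apply: "TH n K x = (if x \<in> sym_perms n \<and> (\<forall>p\<in>Peak n x. p \<in> K \<or> p - 1 \<in> K) then 1 else 0)"
  unfolding TH_def gsum_def by auto

lemma finite_Fam: "finite (Fam n)"
proof -
  have "Fam n \<subseteq> Pow {1..n-1}" unfolding Fam_def by auto
  then show ?thesis by (rule finite_subset) simp
qed

lemma finite_FamC: "finite (FamC n)"
  unfolding FamC_def using finite_Fam by simp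

lemma Peak_Fam: "Peak n x \<in> Fam n"
  unfolding Peak_def Fam_def by auto

lemma PeakC_eq: "PeakC n x = Peak n x - {1}"
  unfolding PeakC_def Peak_def by auto

lemma PeakC_FamC: "PeakC n x \<in> FamC n"
  unfolding PeakC_def FamC_def Fam_def by auto

lemma Fam_pos: "F \<in> Fam n \<Longrightarrow> p \<in> F \<Longrightarrow> 1 \<le> p"
  unfolding Fam_def by auto

lemma FamC_pos: assumes "F \<in> FamC n" "p \<in> F" shows "2 \<le> p"
proof -
  have "1 \<le> p" "p \<noteq> 1" using assms unfolding FamC_def Fam_def by auto
  then show ?thesis by simp
qed

definition cnd :: "nat set \<Rightarrow> nat set \<Rightarrow> bool" where
  "cnd K F = (\<forall>p\<in>F. p \<in> K \<or> p - 1 \<in> K)"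

lemma TH_apply': "TH n K x = (if x \<in> sym_perms n \<and> cnd K (Peak n x) then 1 else 0)"
  unfolding TH_apply cnd_def ..

lemma TH_PP: "TH n K = (\<lambda>x. \<Sum>F\<in>Fam n. (if cnd K F then 1 else 0) * PP n F x)"
proof (rule ext)
  fix x
  show "TH n K x = (\<Sum>F\<in>Fam n. (if cnd K F then 1 else 0) * PP n F x)"
  proof (cases "x \<in> sym_perms n")
    case True
    have "(\<Sum>F\<in>Fam n. (if cnd K F then 1 else 0) * PP n F x) =
          (\<Sum>F\<in>Fam n. if Peak n x = F then (if cnd K F then 1 else 0) else 0)"
      by (rule sum.cong[OF refl]) (simp add: PP_apply True)
    also have "\<dots> = (if cnd K (Peak n x) then 1 else 0)"
      using finite_Fam Peak_Fam by (simp add: sum.delta)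
    finally show ?thesis using True by (simp add: TH_apply cnd_def)
  next
    case False then show ?thesis by (simp add: TH_apply PP_apply)
  qed
qed

lemma cnd_PeakC: "0 \<in> K \<Longrightarrow> cnd K (Peak n x) = cnd K (PeakC n x)"
  unfolding cnd_def PeakC_eq by auto

lemma TH_PPC: assumes "0 \<in> K" shows "TH n K = (\<lambda>x. \<Sum>F\<in>FamC n. (if cnd K F then 1 else 0) * PPC n F x)"
proof (rule ext)
  fix x
  show "TH n K x = (\<Sum>F\<in>FamC n. (if cnd K F then 1 else 0) * PPC n F x)"
  proof (cases "x \<in> sym_perms n")
    case True
    have "(\<Sum>F\<in>FamC n. (if cnd K F then 1 else 0) * PPC n F x) =
          (\<Sum>F\<in>FamC n. if PeakC n x = F then (if cnd K F then 1 else 0) else 0)"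
      by (rule sum.cong[OF refl]) (simp add: PPC_apply True)
    also have "\<dots> = (if cnd K (PeakC n x) then 1 else 0)"
      using finite_FamC PeakC_FamC by (simp add: sum.delta)
    finally show ?thesis using True cnd_PeakC[OF assms] by (simp add: TH_apply cnd_def)
  next
    case False then show ?thesis by (simp add: TH_apply PPC_apply)
  qed
qed

lemma TH_in_PeakAlg: "TH n K \<in> PeakAlg n"
  unfolding PeakAlg_def qspan_def TH_PP by (intro CollectI exI[where x="\<lambda>F. if cnd K F then 1 else 0"]) (rule refl)

lemma TH_in_PeakAlgC: "0 \<in> K \<Longrightarrow> TH n K \<in> PeakAlgC n"
  unfolding PeakAlgC_def qspan_def
  by (intro CollectI exI[where x="\<lambda>F. if cnd K F then 1 else 0"]) (rule TH_PPC)

lemma TH_split: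
  assumes "F \<in> Fam n" "cnd K F"
  shows "TH n K = (\<lambda>x. PP n F x + (\<Sum>F'\<in>{F' \<in> Fam n. F' \<noteq> F \<and> cnd K F'}. PP n F' x))"
proof (rule ext)
  fix x
  show "TH n K x = PP n F x + (\<Sum>F'\<in>{F' \<in> Fam n. F' \<noteq> F \<and> cnd K F'}. PP n F' x)"
  proof (cases "x \<in> sym_perms n")
    case True
    have fin: "finite {F' \<in> Fam n. F' \<noteq> F \<and> cnd K F'}" using finite_Fam by simp
    have "(\<Sum>F'\<in>{F' \<in> Fam n. F' \<noteq> F \<and> cnd K F'}. PP n F' x) =
          (\<Sum>F'\<in>{F' \<in> Fam n. F' \<noteq> F \<and> cnd K F'}. if Peak n x = F' then 1 else 0)"
      by (rule sum.cong[OF refl]) (simp add: PP_apply True)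
    also have "\<dots> = (if Peak n x \<in> {F' \<in> Fam n. F' \<noteq> F \<and> cnd K F'} then 1 else 0)"
      using fin by (simp add: sum.delta)
    finally show ?thesis using True assms Peak_Fam[of n x]
      by (simp add: TH_apply' PP_apply)
  next
    case False then show ?thesis by (simp add: TH_apply PP_apply)
  qed
qed

lemma TH_splitC:
  assumes "F \<in> FamC n" "cnd K F" "0 \<in> K"
  shows "TH n K = (\<lambda>x. PPC n F x + (\<Sum>F'\<in>{F' \<in> FamC n. F' \<noteq> F \<and> cnd K F'}. PPC n F' x))"
proof (rule ext)
  fix x
  show "TH n K x = PPC n F x + (\<Sum>F'\<in>{F' \<in> FamC n. F' \<noteq> F \<and> cnd K F'}. PPC n F' x)"
  proof (cases "x \<in> sym_perms n")
    case True
    have fin: "finite {F' \<in> FamC n. F' \<noteq> F \<and> cnd K F'}" using finite_FamC by simp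
    have "(\<Sum>F'\<in>{F' \<in> FamC n. F' \<noteq> F \<and> cnd K F'}. PPC n F' x) =
          (\<Sum>F'\<in>{F' \<in> FamC n. F' \<noteq> F \<and> cnd K F'}. if PeakC n x = F' then 1 else 0)"
      by (rule sum.cong[OF refl]) (simp add: PPC_apply True)
    also have "\<dots> = (if PeakC n x \<in> {F' \<in> FamC n. F' \<noteq> F \<and> cnd K F'} then 1 else 0)"
      using fin by (simp add: sum.delta)
    finally show ?thesis using True assms PeakC_FamC[of n x] cnd_PeakC[OF assms(3), of n x]
      by (simp add: TH_apply' PPC_apply)
  next
    case False then show ?thesis by (simp add: TH_apply PPC_apply)
  qed
qed

definition mu :: "nat set \<Rightarrow> nat" where "mu F = (\<Sum>f\<in>F. Suc f)"

lemma mu_less: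
  assumes fin: "finite F" "finite F'" and sub: "F' \<subseteq> {p. p \<in> F \<or> Suc p \<in> F}"
    and nc: "\<forall>i\<in>F'. Suc i \<notin> F'" and ne: "F' \<noteq> F"
  shows "mu F' < mu F"
proof -
  define g where "g p = (if p \<in> F then p else Suc p)" for p
  have gF: "g ` F' \<subseteq> F" using sub unfolding g_def by auto
  have ginj: "inj_on g F'"
  proof (rule inj_onI)
    fix a b assume ab: "a \<in> F'" "b \<in> F'" "g a = g b"
    show "a = b"
    proof (cases "a \<in> F"; cases "b \<in> F")
      assume "a \<in> F" "b \<notin> F" then have "a = Suc b" using ab unfolding g_def by simp
      then show ?thesis using nc ab by auto
    next
      assume "a \<notin> F" "b \<in> F" then have "b = Suc a" using ab unfolding g_def by simp
      then show ?thesis using nc ab by auto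
    qed (use ab in \<open>auto simp: g_def\<close>)
  qed
  have le1: "(\<Sum>p\<in>F'. Suc p) \<le> (\<Sum>p\<in>F'. Suc (g p))" by (rule sum_mono) (simp add: g_def)
  have eq: "(\<Sum>p\<in>F'. Suc (g p)) = (\<Sum>q\<in>g ` F'. Suc q)" by (simp add: sum.reindex[OF ginj])
  have le2: "(\<Sum>q\<in>g ` F'. Suc q) \<le> (\<Sum>q\<in>F. Suc q)" by (rule sum_mono2[OF fin(1) gF]) simp
  show ?thesis
  proof (cases "F' \<subseteq> F")
    case True
    then have "F' \<subset> F" using ne by auto
    then obtain q where q: "q \<in> F" "q \<notin> F'" by blast
    have "(\<Sum>q\<in>F. Suc q) = (\<Sum>q\<in>F - F'. Suc q) + (\<Sum>q\<in>F'. Suc q)"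
      by (rule sum.subset_diff[OF True fin(1)])
    moreover have "Suc q \<le> (\<Sum>q\<in>F - F'. Suc q)" using q fin(1) by (intro member_le_sum) auto
    ultimately show ?thesis unfolding mu_def by simp
  next
    case False
    then obtain p where p: "p \<in> F'" "p \<notin> F" by blast
    have "(\<Sum>p\<in>F'. Suc p) < (\<Sum>p\<in>F'. Suc (g p))"
      by (rule sum_strict_mono_ex1[OF fin(2)]) (use p in \<open>auto simp: g_def\<close>)
    then show ?thesis unfolding mu_def using eq le2 by simp
  qed
qed

lemma inv_PP:
  assumes n: "0 < n"
  shows "F \<in> Fam n \<Longrightarrow> PP n F \<in> qspan (Pow {0..<n}) (TH n)"
proof -
  let ?V = "qspan (Pow {0..<n}) (TH n)"
  have "\<forall>F. F \<in> Fam n \<longrightarrow> mu F = m \<longrightarrow> PP n F \<in> ?V" for m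
  proof (induction m rule: less_induct)
    case (less m)
    show ?case
    proof (intro allI impI)
      fix F assume F: "F \<in> Fam n" "mu F = m"
      define K where "K = (\<lambda>f. f - 1) ` F"
      have FS: "F \<subseteq> {1..n-1}" using F unfolding Fam_def by auto
      have KP: "K \<in> Pow {0..<n}" using FS n unfolding K_def by (auto simp: subset_iff)
      have cF: "cnd K F" unfolding cnd_def K_def by auto
      have finF: "finite F" using FS finite_subset by blast
      have IH: "PP n F' \<in> ?V" if F': "F' \<in> {F' \<in> Fam n. F' \<noteq> F \<and> cnd K F'}" for F'
      proof -
        have F'f: "F' \<in> Fam n" "F' \<noteq> F" "cnd K F'" using F' by auto
        have F'S: "F' \<subseteq> {1..n-1}" using F'f unfolding Fam_def by auto
        have sub: "F' \<subseteq> {p. p \<in> F \<or> Suc p \<in> F}"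
        proof
          fix p assume p: "p \<in> F'"
          then have p1: "1 \<le> p" using F'S by auto
          have "p \<in> K \<or> p - 1 \<in> K" using F'f(3) p unfolding cnd_def by auto
          then show "p \<in> {p. p \<in> F \<or> Suc p \<in> F}"
          proof
            assume "p \<in> K"
            then obtain f where "f \<in> F" "p = f - 1" unfolding K_def by auto
            moreover then have "1 \<le> f" using FS by auto
            ultimately show ?thesis by auto
          next
            assume "p - 1 \<in> K"
            then obtain f where f: "f \<in> F" "p - 1 = f - 1" unfolding K_def by auto
            then have "1 \<le> f" using FS by auto
            then have "p = f" using f(2) p1 by arith
            then show ?thesis using f(1) by auto
          qed
        qed
        have nc: "\<forall>i\<in>F'. Suc i \<notin> F'" using F'f(1) unfolding Fam_def by auto
        have "mu F' < mu F"
          by (rule mu_less[OF finF _ sub nc F'f(2)]) (use F'S finite_subset in blast)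
        then show ?thesis using less F'f(1) F(2) by blast
      qed
      have "PP n F = (\<lambda>x. TH n K x - (\<Sum>F'\<in>{F' \<in> Fam n. F' \<noteq> F \<and> cnd K F'}. PP n F' x))"
        unfolding TH_split[OF F(1) cF] by simp
      also have "\<dots> \<in> ?V"
        by (intro qspan_diff qspan_gen qspan_sum IH KP) (simp_all add: finite_Fam)
      finally show "PP n F \<in> ?V" .
    qed
  qed
  then show "F \<in> Fam n \<Longrightarrow> PP n F \<in> ?V" by blast
qed

lemma inv_PPC:
  assumes n: "0 < n"
  shows "F \<in> FamC n \<Longrightarrow> PPC n F \<in> qspan {K \<in> Pow {0..<n}. 0 \<in> K} (TH n)"
proof -
  let ?V = "qspan {K \<in> Pow {0..<n}. 0 \<in> K} (TH n)"
  have "\<forall>F. F \<in> FamC n \<longrightarrow> mu F = m \<longrightarrow> PPC n F \<in> ?V" for m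
  proof (induction m rule: less_induct)
    case (less m)
    show ?case
    proof (intro allI impI)
      fix F assume F: "F \<in> FamC n" "mu F = m"
      define K where "K = insert 0 ((\<lambda>f. f - 1) ` F)"
      have FS: "F \<subseteq> {1..n-1}" using F unfolding FamC_def Fam_def by auto
      have KP: "K \<in> {K \<in> Pow {0..<n}. 0 \<in> K}" using FS n unfolding K_def by (auto simp: subset_iff)
      have K0: "0 \<in> K" unfolding K_def by simp
      have cF: "cnd K F" unfolding cnd_def K_def by auto
      have finF: "finite F" using FS finite_subset by blast
      have IH: "PPC n F' \<in> ?V" if F': "F' \<in> {F' \<in> FamC n. F' \<noteq> F \<and> cnd K F'}" for F'
      proof -
        have F'f: "F' \<in> FamC n" "F' \<noteq> F" "cnd K F'" using F' by auto
        have F'S: "F' \<subseteq> {1..n-1}" using F'f unfolding FamC_def Fam_def by auto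
        have sub: "F' \<subseteq> {p. p \<in> F \<or> Suc p \<in> F}"
        proof
          fix p assume p: "p \<in> F'"
          then have p2: "2 \<le> p" using FamC_pos[OF F'f(1)] by auto
          have "p \<in> K \<or> p - 1 \<in> K" using F'f(3) p unfolding cnd_def by auto
          then show "p \<in> {p. p \<in> F \<or> Suc p \<in> F}"
          proof
            assume "p \<in> K"
            then obtain f where "f \<in> F" "p = f - 1" unfolding K_def using p2 by auto
            moreover then have "1 \<le> f" using FS by auto
            ultimately show ?thesis by auto
          next
            assume "p - 1 \<in> K"
            then obtain f where f: "f \<in> F" "p - 1 = f - 1" unfolding K_def using p2 by auto
            then have "1 \<le> f" using FS by auto
            then have "p = f" using f(2) p2 by arith
            then show ?thesis using f(1) by auto
          qed
        qed
        have nc: "\<forall>i\<in>F'. Suc i \<notin> F'" using F'f(1) unfolding FamC_def Fam_def by auto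
        have "mu F' < mu F"
          by (rule mu_less[OF finF _ sub nc F'f(2)]) (use F'S finite_subset in blast)
        then show ?thesis using less F'f(1) F(2) by blast
      qed
      have "PPC n F = (\<lambda>x. TH n K x - (\<Sum>F'\<in>{F' \<in> FamC n. F' \<noteq> F \<and> cnd K F'}. PPC n F' x))"
        unfolding TH_splitC[OF F(1) cF K0] by simp
      also have "\<dots> \<in> ?V"
        by (intro qspan_diff qspan_gen qspan_sum IH KP) (simp_all add: finite_FamC)
      finally show "PPC n F \<in> ?V" .
    qed
  qed
  then show "F \<in> FamC n \<Longrightarrow> PPC n F \<in> ?V" by blast
qed

lemma PeakAlg_eq: assumes "0 < n" shows "PeakAlg n = qspan (Pow {0..<n}) (TH n)"
proof
  show "PeakAlg n \<subseteq> qspan (Pow {0..<n}) (TH n)" unfolding PeakAlg_def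
    by (rule qspan_subset[OF finite_Fam]) (rule inv_PP[OF assms])
  show "qspan (Pow {0..<n}) (TH n) \<subseteq> PeakAlg n" unfolding PeakAlg_def
    by (rule qspan_subset) (simp_all add: TH_in_PeakAlg[unfolded PeakAlg_def])
qed

lemma PeakAlgC_eq: assumes "0 < n" shows "PeakAlgC n = qspan {K \<in> Pow {0..<n}. 0 \<in> K} (TH n)"
proof
  show "PeakAlgC n \<subseteq> qspan {K \<in> Pow {0..<n}. 0 \<in> K} (TH n)" unfolding PeakAlgC_def
    by (rule qspan_subset[OF finite_FamC]) (rule inv_PPC[OF assms])
  show "qspan {K \<in> Pow {0..<n}. 0 \<in> K} (TH n) \<subseteq> PeakAlgC n" unfolding PeakAlgC_def
    by (rule qspan_subset) (simp_all add: TH_in_PeakAlgC[unfolded PeakAlgC_def])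
qed

lemma phi_Sigma: "phi n ` SigmaB n = qspan (Pow {0..<n}) (TH n)"
proof -
  have "phi n ` SigmaB n = qspan (Pow {0..<n}) (\<lambda>K. phi n (XB n K))"
    unfolding SigmaB_def by (rule qspan_image) (rule phi_lin)
  also have "\<dots> = qspan (Pow {0..<n}) (TH n)"
    by (rule qspan_scaled[where c="\<lambda>K. 2 ^ card K"]) (simp_all add: phi_XB)
  finally show ?thesis .
qed

lemma half_phi_IB0:
  "(\<lambda>z x. 1 / 2 * phi n z x) ` IB0 n = qspan {K \<in> Pow {0..<n}. 0 \<in> K} (TH n)"
proof -
  have "(\<lambda>z x. 1 / 2 * phi n z x) ` IB0 n = qspan {K \<in> Pow {0..<n}. 0 \<in> K} (\<lambda>K x. 1 / 2 * phi n (XB n K) x)"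
    unfolding IB0_def by (rule qspan_image) (rule phi_smult_lin)
  also have "\<dots> = qspan {K \<in> Pow {0..<n}. 0 \<in> K} (TH n)"
    by (rule qspan_scaled[where c="\<lambda>K. 1 / 2 * 2 ^ card K"]) (auto simp: phi_XB)
  finally show ?thesis .
qed

lemma PPC_empty: assumes n: "0 < n" shows "PPC n {} = (\<lambda>x. 1 / 2 * phi n (XB n {0}) x)"
proof (rule ext)
  fix x
  have "TH n {0} x = PPC n {} x"
  proof -
    have "cnd {0} (Peak n x) = (PeakC n x = {})"
    proof -
      have ge: "\<forall>p\<in>Peak n x. 1 \<le> p" unfolding Peak_def by auto
      have "cnd {0} (Peak n x) = (\<forall>p\<in>Peak n x. p = 1)" using ge unfolding cnd_def by fastforce
      moreover have "(PeakC n x = {}) = (\<forall>p\<in>Peak n x. p = 1)" unfolding PeakC_eq by auto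
      ultimately show ?thesis by simp
    qed
    then show ?thesis by (simp add: TH_apply' PPC_apply)
  qed
  moreover have "{0} \<subseteq> {0..<n}" using n by simp
  ultimately show "PPC n {} x = 1 / 2 * phi n (XB n {0}) x" by (simp add: phi_XB)
qed

theorem proposition7p14:
  fixes n :: nat
  assumes "n \<ge> 1"
  shows "IB0 n = (\<lambda>y. galg_mult (signed_perms n) (XB n {0}) y) ` SigmaB n
         \<and> PeakAlgC n = (\<lambda>y. galg_mult (sym_perms n) (PPC n {}) y) ` PeakAlg n"
proof
  have n: "0 < n" using assms by simp
  show A: "IB0 n = (\<lambda>y. galg_mult (signed_perms n) (XB n {0}) y) ` SigmaB n" by (rule partA[OF n])
  have "(\<lambda>y. galg_mult (sym_perms n) (PPC n {}) y) ` PeakAlg n =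
        (\<lambda>y. galg_mult (sym_perms n) (PPC n {}) y) ` (phi n ` SigmaB n)"
    using PeakAlg_eq[OF n] phi_Sigma by simp
  also have "\<dots> = (\<lambda>y. galg_mult (sym_perms n) (PPC n {}) (phi n y)) ` SigmaB n"
    by (simp add: image_image)
  also have "\<dots> = (\<lambda>y. (\<lambda>z x. 1 / 2 * phi n z x) (galg_mult (signed_perms n) (XB n {0}) y)) ` SigmaB n"
  proof (rule image_cong[OF refl])
    fix y
    show "galg_mult (sym_perms n) (PPC n {}) (phi n y) =
          (\<lambda>z x. 1 / 2 * phi n z x) (galg_mult (signed_perms n) (XB n {0}) y)"
      unfolding PPC_empty[OF n] galg_mult_smult1 phi_hom ..
  qed
  also have "\<dots> = (\<lambda>z x. 1 / 2 * phi n z x) ` ((\<lambda>y. galg_mult (signed_perms n) (XB n {0}) y) ` SigmaB n)"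
    by (simp add: image_image)
  also have "\<dots> = (\<lambda>z x. 1 / 2 * phi n z x) ` IB0 n" using A by simp
  also have "\<dots> = PeakAlgC n" using half_phi_IB0 PeakAlgC_eq[OF n] by simp
  finally show "PeakAlgC n = (\<lambda>y. galg_mult (sym_perms n) (PPC n {}) y) ` PeakAlg n" by simp
qed

end
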